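(* For any $t>0$ there exists $L>0$, depending only on $\xi$ and $t$, such that for any $N$, \[ \mathbb P\Big\{\forall\sigma,\pi\in\overline M_N:\ \frac1N|H_N(\sigma)-H_N(\pi)|\le L\max_{s\in\mathscr S}\sqrt{R_s(\sigma-\pi,\sigma-\pi)}\Big\}>1-e^{-tN}. \]
   Context: Fix a finite set $\mathscr S$ of species. For each $N\ge1$, $\{1,\dots,N\}=\bigcup_{s\in\mathscr S}I_s$ with disjoint $I_s$, $N_s=|I_s|$, $N_s/N\to\lambda_s\in(0,1)$. $R_s(\sigma,\sigma')=N_s^{-1}\sum_{i\in I_s}\sigma_i\sigma'_i$ for $\sigma,\sigma'\in\mathbb R^N$. $\overline M_N=\{\sigma\in\mathbb R^N:\sum_{i\in I_s}\sigma_i^2\le N_s\ \forall s\in\mathscr S\}$. $P=\{p\in\mathbb Z_{\ge0}^{\mathscr S}:|p|\ge1\}$. The mixture is $\xi(x)=\sum_{p\in P}\Delta_p^2\prod_sx(s)^{p(s)}$, $\Delta_p\ge0$, $\xi(1+\epsilon)<\infty$ for some $\epsilon>0$. $H_N(\sigma)=\sqrt N\sum_{k\ge1}\sum_{i_1,\dots,i_k=1}^N\Delta_{i_1,\dots,i_k}J_{i_1,\dots,i_k}\sigma_{i_1}\cdots\sigma_{i_k}$ for $\sigma\in\mathbb R^N$, with $J$ i.i.d. standard Gaussian and $\Delta_{i_1,\dots,i_k}^2=\Delta_p^2\frac{\prod_sp(s)!}{k!}\prod_sN_s^{-p(s)}$ when $\#\{j\le k:i_j\in I_s\}=p(s)$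 for all $s$. *)

theory Defs
  imports "HOL-Probability.Probability"
begin

definition gauss_space :: "(nat list \<Rightarrow> real) measure" where
  "gauss_space = (\<Pi>\<^sub>M is\<in>(UNIV :: nat list set). density lborel std_normal_density)"

text \<open>Species partition: I N s is the set I_s at size N.\<close>
definition Nsp :: "(nat \<Rightarrow> 's \<Rightarrow> nat set) \<Rightarrow> nat \<Rightarrow> 's \<Rightarrow> nat" where
  "Nsp I N s = card (I N s)"

definition species_count :: "(nat \<Rightarrow> 's \<Rightarrow> nat set) \<Rightarrow> nat \<Rightarrow> nat list \<Rightarrow> 's \<Rightarrow> nat" where
  "species_count I N is s = card {j. j < length is \<and> is ! j \<in> I N s}"

definition Delta_idx :: "(('s::finite \<Rightarrow> nat) \<Rightarrow> real) \<Rightarrow> (nat \<Rightarrow> 's \<Rightarrow> nat set) \<Rightarrow> nat \<Rightarrow> nat list \<Rightarrow> real" where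
  "Delta_idx Delta I N is =
     (let p = species_count I N is in
      sqrt ((Delta p)\<^sup>2 * (\<Prod>s\<in>UNIV. fact (p s)) / fact (length is)
            * (\<Prod>s\<in>UNIV. inverse (real (Nsp I N s)) ^ p s)))"

definition HN :: "(('s::finite \<Rightarrow> nat) \<Rightarrow> real) \<Rightarrow> (nat \<Rightarrow> 's \<Rightarrow> nat set) \<Rightarrow> nat
                  \<Rightarrow> (nat list \<Rightarrow> real) \<Rightarrow> (nat \<Rightarrow> real) \<Rightarrow> real" where
  "HN Delta I N J \<sigma> = sqrt (real N) *
     (\<Sum>k. \<Sum>is\<in>{is. length is = Suc k \<and> set is \<subseteq> {1..N}}.
            Delta_idx Delta I N is * J is * (\<Prod>j<length is. \<sigma> (is ! j)))"

definition Rs :: "(nat \<Rightarrow> 's \<Rightarrow> nat set) \<Rightarrow> nat \<Rightarrow> 's \<Rightarrow> (nat \<Rightarrow> real) \<Rightarrow> (nat \<Rightarrow> real) \<Rightarrow> real" where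
  "Rs I N s \<sigma> \<sigma>' = (\<Sum>i\<in>I N s. \<sigma> i * \<sigma>' i) / real (Nsp I N s)"

definition Mbar :: "(nat \<Rightarrow> 's \<Rightarrow> nat set) \<Rightarrow> nat \<Rightarrow> (nat \<Rightarrow> real) set" where
  "Mbar I N = {\<sigma>. \<forall>s. (\<Sum>i\<in>I N s. (\<sigma> i)\<^sup>2) \<le> real (Nsp I N s)}"

definition Pset :: "('s::finite \<Rightarrow> nat) set" where
  "Pset = {p. (\<Sum>s\<in>UNIV. p s) \<ge> 1}"

definition xi :: "(('s::finite \<Rightarrow> nat) \<Rightarrow> real) \<Rightarrow> ('s \<Rightarrow> real) \<Rightarrow> real" where
  "xi Delta x = (\<Sum>\<^sub>\<infinity>p\<in>Pset. (Delta p)\<^sup>2 * (\<Prod>s\<in>UNIV. x s ^ p s))"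

end

theory Submission
  imports Defs "HOL-Combinatorics.Multiset_Permutations"
begin


abbreviation "GM \<equiv> density lborel std_normal_density"

lemma prob_GM: "prob_space GM"
  by (rule prob_space_normal_density) simp

lemma pps_gauss: "product_prob_space (\<lambda>_::nat list. GM)"
  unfolding product_prob_space_def product_prob_space_axioms_def product_sigma_finite_def
  using prob_GM by (auto simp: prob_space_imp_sigma_finite)

lemma prob_gauss: "prob_space gauss_space"
  unfolding gauss_space_def by (rule prob_space_PiM) (rule prob_GM)

lemma space_gauss: "space gauss_space = UNIV"
  unfolding gauss_space_def by (simp add: space_PiM)

lemma meas_coord[measurable]: "(\<lambda>J. J i) \<in> borel_measurable gauss_space"
proof -
  have "(\<lambda>J. J i) \<in> measurable gauss_space GM"
    unfolding gauss_space_def by (rule measurable_component_singleton) simp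
  then show ?thesis by (simp add: measurable_def space_gauss)
qed

lemma normal_shift: "std_normal_density x * exp (b * x) = exp (b\<^sup>2/2) * normal_density b 1 x"
  unfolding normal_density_def by (simp add: exp_add[symmetric] power2_eq_square algebra_simps) (simp add: field_simps)

lemma nn_normal: "(\<integral>\<^sup>+x. ennreal (normal_density b 1 x) \<partial>lborel) = 1"
  by (simp add: nn_integral_eq_integral)

lemma mgf_GM: "(\<integral>\<^sup>+x. ennreal (exp (b * x)) \<partial>GM) = ennreal (exp (b\<^sup>2/2))"
proof -
  have "(\<integral>\<^sup>+x. ennreal (exp (b * x)) \<partial>GM) = (\<integral>\<^sup>+x. ennreal (std_normal_density x) * ennreal (exp (b * x)) \<partial>lborel)"
    by (subst nn_integral_density) auto
  also have "\<dots> = (\<integral>\<^sup>+x. ennreal (exp (b\<^sup>2/2)) * ennreal (normal_density b 1 x) \<partial>lborel)"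
    by (intro nn_integral_cong) (simp add: ennreal_mult'[symmetric] normal_shift)
  also have "\<dots> = ennreal (exp (b\<^sup>2/2))"
    by (subst nn_integral_cmult) (auto simp: nn_normal)
  finally show ?thesis .
qed

lemma sets_gauss: "sets gauss_space = sets (PiM (UNIV::nat list set) (\<lambda>_. borel))"
  unfolding gauss_space_def by (rule sets_PiM_cong) auto

lemma indep_coords: "prob_space.indep_vars gauss_space (\<lambda>_. borel) (\<lambda>i J. J i) UNIV"
proof -
  interpret P: prob_space gauss_space by (rule prob_gauss)
  interpret PP: product_prob_space "\<lambda>_. GM" "UNIV :: nat list set" by (rule pps_gauss)
  have eq: "P.indep_vars (\<lambda>_. borel) (\<lambda>i J. J i) UNIV \<longleftrightarrow>
     distr gauss_space (PiM UNIV (\<lambda>_. borel)) (\<lambda>x. \<lambda>i\<in>UNIV. x i) = PiM UNIV (\<lambda>i. distr gauss_space borel (\<lambda>x. x i))"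
    by (rule P.indep_vars_iff_distr_eq_PiM) auto
  have 1: "distr gauss_space (PiM UNIV (\<lambda>_. borel)) (\<lambda>x. \<lambda>i\<in>UNIV. x i) = gauss_space"
  proof -
    have "(\<lambda>x::nat list \<Rightarrow> real. \<lambda>i\<in>UNIV. x i) = (\<lambda>x. x)" by (auto simp: restrict_def)
    then show ?thesis using distr_id2[OF sets_gauss[symmetric]] by simp
  qed
  have 2: "distr gauss_space borel (\<lambda>x. x i) = GM" for i
  proof -
    have "distr gauss_space borel (\<lambda>x. x i) = distr gauss_space GM (\<lambda>x. x i)"
      by (rule distr_cong) auto
    also have "\<dots> = GM" unfolding gauss_space_def by (rule PP.PiM_component) simp
    finally show ?thesis .
  qed
  have "PiM UNIV (\<lambda>i. distr gauss_space borel (\<lambda>x. x i)) = gauss_space"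
  proof -
    have "PiM UNIV (\<lambda>i. distr gauss_space borel (\<lambda>x. x i)) = PiM UNIV (\<lambda>_::nat list. GM)"
      by (simp add: 2)
    then show ?thesis by (simp add: gauss_space_def)
  qed
  with 1 eq show ?thesis by simp
qed

lemma mgf_lin:
  fixes S :: "nat list set" and c :: "nat list \<Rightarrow> real"
  assumes "finite S"
  shows "(\<integral>\<^sup>+J. ennreal (exp (\<Sum>i\<in>S. c i * J i)) \<partial>gauss_space) = ennreal (exp ((\<Sum>i\<in>S. (c i)\<^sup>2) / 2))"
proof -
  interpret P: prob_space gauss_space by (rule prob_gauss)
  interpret PP: product_prob_space "\<lambda>_. GM" "UNIV :: nat list set" by (rule pps_gauss)
  have ind: "P.indep_vars (\<lambda>_. borel) (\<lambda>i J. ennreal (exp (c i * J i))) S"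
    by (rule P.indep_vars_compose2[OF P.indep_vars_subset[OF indep_coords]]) auto
  have "(\<integral>\<^sup>+J. ennreal (exp (\<Sum>i\<in>S. c i * J i)) \<partial>gauss_space) = (\<integral>\<^sup>+J. (\<Prod>i\<in>S. ennreal (exp (c i * J i))) \<partial>gauss_space)"
    using assms by (simp add: exp_sum prod_ennreal)
  also have "\<dots> = (\<Prod>i\<in>S. \<integral>\<^sup>+J. ennreal (exp (c i * J i)) \<partial>gauss_space)"
    by (rule P.indep_vars_nn_integral[OF assms ind]) auto
  also have "\<dots> = (\<Prod>i\<in>S. ennreal (exp ((c i)\<^sup>2/2)))"
  proof (rule prod.cong[OF refl])
    fix i assume "i \<in> S"
    have "(\<integral>\<^sup>+J. ennreal (exp (c i * J i)) \<partial>gauss_space) = (\<integral>\<^sup>+x. ennreal (exp (c i * x)) \<partial>(distr gauss_space GM (\<lambda>J. J i)))"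
      by (subst nn_integral_distr) (auto simp: gauss_space_def intro!: measurable_component_singleton intro: meas_coord[unfolded gauss_space_def])
    also have "distr gauss_space GM (\<lambda>J. J i) = GM"
      unfolding gauss_space_def by (rule PP.PiM_component) simp
    finally show "(\<integral>\<^sup>+J. ennreal (exp (c i * J i)) \<partial>gauss_space) = ennreal (exp ((c i)\<^sup>2/2))"
      using mgf_GM by simp
  qed
  also have "\<dots> = ennreal (\<Prod>i\<in>S. exp ((c i)\<^sup>2/2))"
    by (simp add: prod_ennreal)
  also have "\<dots> = ennreal (exp ((\<Sum>i\<in>S. (c i)\<^sup>2) / 2))"
    using assms by (simp add: exp_sum sum_divide_distrib)
  finally show ?thesis .
qed

lemma tail_one:
  fixes S :: "nat list set" and c :: "nat list \<Rightarrow> real"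
  assumes S: "finite S" and v: "v > 0" and cv: "(\<Sum>i\<in>S. (c i)\<^sup>2) \<le> v" and a: "a \<ge> 0"
  shows "measure gauss_space {J \<in> space gauss_space. a \<le> (\<Sum>i\<in>S. c i * J i)} \<le> exp (- a\<^sup>2 / (2 * v))"
proof -
  interpret P: prob_space gauss_space by (rule prob_gauss)
  define l where "l = a / v"
  have l0: "l \<ge> 0" using a v by (simp add: l_def)
  let ?u = "\<lambda>J. ennreal (exp (\<Sum>i\<in>S. (l * c i) * J i))"
  have meas: "(\<lambda>J. ?u J * indicator (space gauss_space) J) \<in> borel_measurable gauss_space"
    by measurable
  have sub: "{J \<in> space gauss_space. a \<le> (\<Sum>i\<in>S. c i * J i)} \<subseteq>
      {J \<in> space gauss_space. 1 \<le> ennreal (exp (- l * a)) * ?u J}"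
  proof safe
    fix J assume "a \<le> (\<Sum>i\<in>S. c i * J i)"
    then have "l * a \<le> l * (\<Sum>i\<in>S. c i * J i)" using l0 by (rule mult_left_mono)
    then have "l * a \<le> (\<Sum>i\<in>S. (l * c i) * J i)" by (simp add: sum_distrib_left mult.assoc)
    then have "1 \<le> exp (- l * a) * exp (\<Sum>i\<in>S. (l * c i) * J i)"
      by (simp add: exp_add[symmetric])
    then show "1 \<le> ennreal (exp (- l * a)) * ?u J"
      by (simp add: ennreal_mult'[symmetric])
  qed
  have "emeasure gauss_space {J \<in> space gauss_space. a \<le> (\<Sum>i\<in>S. c i * J i)}
      \<le> emeasure gauss_space {J \<in> space gauss_space. 1 \<le> ennreal (exp (- l * a)) * ?u J}"
    using sub by (intro emeasure_mono) auto
  also have "\<dots> \<le> ennreal (exp (- l * a)) * (\<integral>\<^sup>+J. ?u J * indicator (space gauss_space) J \<partial>gauss_space)"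
    by (rule nn_integral_Markov_inequality[OF meas]) auto
  also have "(\<integral>\<^sup>+J. ?u J * indicator (space gauss_space) J \<partial>gauss_space) = (\<integral>\<^sup>+J. ?u J \<partial>gauss_space)"
    by (intro nn_integral_cong) auto
  also have "\<dots> = ennreal (exp ((\<Sum>i\<in>S. (l * c i)\<^sup>2) / 2))"
    by (rule mgf_lin[OF S])
  also have "ennreal (exp (- l * a)) * \<dots> = ennreal (exp (- l * a + (\<Sum>i\<in>S. (l * c i)\<^sup>2) / 2))"
    by (simp add: ennreal_mult'[symmetric] exp_add[symmetric])
  also have "\<dots> \<le> ennreal (exp (- a\<^sup>2 / (2 * v)))"
  proof (intro ennreal_leI)
    have "(\<Sum>i\<in>S. (l * c i)\<^sup>2) = l\<^sup>2 * (\<Sum>i\<in>S. (c i)\<^sup>2)"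
      by (simp add: power_mult_distrib sum_distrib_left)
    also have "\<dots> \<le> l\<^sup>2 * v" using cv by (intro mult_left_mono) auto
    finally have "- l * a + (\<Sum>i\<in>S. (l * c i)\<^sup>2) / 2 \<le> - l * a + l\<^sup>2 * v / 2" by simp
    also have "\<dots> = - a\<^sup>2 / (2 * v)" using v by (simp add: l_def field_simps power2_eq_square)
    finally show "exp (- l * a + (\<Sum>i\<in>S. (l * c i)\<^sup>2) / 2) \<le> exp (- a\<^sup>2 / (2 * v))" by simp
  qed
  finally show ?thesis
    by (simp add: P.emeasure_eq_measure)
qed

lemma tail_two:
  fixes S :: "nat list set" and c :: "nat list \<Rightarrow> real"
  assumes S: "finite S" and v: "v > 0" and cv: "(\<Sum>i\<in>S. (c i)\<^sup>2) \<le> v" and a: "a \<ge> 0"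
  shows "measure gauss_space {J \<in> space gauss_space. a < \<bar>\<Sum>i\<in>S. c i * J i\<bar>} \<le> 2 * exp (- a\<^sup>2 / (2 * v))"
proof -
  interpret P: prob_space gauss_space by (rule prob_gauss)
  have cv': "(\<Sum>i\<in>S. (- c i)\<^sup>2) \<le> v" using cv by simp
  have "{J \<in> space gauss_space. a < \<bar>\<Sum>i\<in>S. c i * J i\<bar>} \<subseteq>
     {J \<in> space gauss_space. a \<le> (\<Sum>i\<in>S. c i * J i)} \<union> {J \<in> space gauss_space. a \<le> (\<Sum>i\<in>S. (- c i) * J i)}"
    by (auto simp: sum_negf)
  then have "measure gauss_space {J \<in> space gauss_space. a < \<bar>\<Sum>i\<in>S. c i * J i\<bar>} \<le>
     measure gauss_space ({J \<in> space gauss_space. a \<le> (\<Sum>i\<in>S. c i * J i)} \<union> {J \<in> space gauss_space. a \<le> (\<Sum>i\<in>S. (- c i) * J i)})"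
    by (intro P.finite_measure_mono) measurable
  also have "\<dots> \<le> measure gauss_space {J \<in> space gauss_space. a \<le> (\<Sum>i\<in>S. c i * J i)} + measure gauss_space {J \<in> space gauss_space. a \<le> (\<Sum>i\<in>S. (- c i) * J i)}"
    by (intro measure_Un_le) measurable
  also have "\<dots> \<le> exp (- a\<^sup>2 / (2 * v)) + exp (- a\<^sup>2 / (2 * v))"
    by (intro add_mono tail_one[OF S v cv a] tail_one[OF S v cv' a])
  finally show ?thesis by simp
qed



definition Ik :: "nat \<Rightarrow> nat \<Rightarrow> nat list set" where
  "Ik N k = {is. length is = k \<and> set is \<subseteq> {1..N}}"

lemma finite_Ik: "finite (Ik N k)"
  unfolding Ik_def using finite_lists_length_eq[of "{1..N}" k] by (simp add: conj_commute)

definition FF :: "(('s::finite \<Rightarrow> nat) \<Rightarrow> real) \<Rightarrow> (nat \<Rightarrow> 's \<Rightarrow> nat set) \<Rightarrow> nat \<Rightarrow> nat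
   \<Rightarrow> (nat list \<Rightarrow> real) \<Rightarrow> (nat \<Rightarrow> nat \<Rightarrow> real) \<Rightarrow> real" where
  "FF Delta I N k J U = (\<Sum>is\<in>Ik N k. Delta_idx Delta I N is * J is * (\<Prod>j<k. U j (is ! j)))"

lemma tele_prod:
  fixes a b :: "nat \<Rightarrow> real"
  shows "(\<Prod>l<k. a l) - (\<Prod>l<k. b l) =
    (\<Sum>j<k. \<Prod>l<k. (if l < j then b l else if l = j then a l - b l else a l))"
proof (induction k)
  case 0
  then show ?case by simp
next
  case (Suc k)
  have "(\<Prod>l<Suc k. a l) - (\<Prod>l<Suc k. b l) =
     ((\<Prod>l<k. a l) - (\<Prod>l<k. b l)) * a k + (\<Prod>l<k. b l) * (a k - b k)"
    by (simp add: algebra_simps)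
  also have "((\<Prod>l<k. a l) - (\<Prod>l<k. b l)) * a k =
     (\<Sum>j<k. \<Prod>l<Suc k. (if l < j then b l else if l = j then a l - b l else a l))"
    unfolding Suc.IH sum_distrib_right by (intro sum.cong) auto
  also have "(\<Prod>l<k. b l) * (a k - b k) =
     (\<Prod>l<Suc k. (if l < k then b l else if l = k then a l - b l else a l))"
    by simp
  finally show ?case by simp
qed

lemma FF_cong:
  assumes "\<And>j. j < k \<Longrightarrow> U j = V j"
  shows "FF Delta I N k J U = FF Delta I N k J V"
  unfolding FF_def using assms by (intro sum.cong refl arg_cong2[where f="(*)"] prod.cong) auto

lemma FF_tele:
  "FF Delta I N k J U - FF Delta I N k J V =
   (\<Sum>j<k. FF Delta I N k J (\<lambda>l. if l < j then V l else if l = j then (\<lambda>i. U l i - V l i) else U l))"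
proof -
  have "FF Delta I N k J U - FF Delta I N k J V =
    (\<Sum>is\<in>Ik N k. Delta_idx Delta I N is * J is * ((\<Prod>j<k. U j (is ! j)) - (\<Prod>j<k. V j (is ! j))))"
    unfolding FF_def by (simp add: sum_subtractf algebra_simps)
  also have "\<dots> = (\<Sum>is\<in>Ik N k. \<Sum>j<k. Delta_idx Delta I N is * J is *
        (\<Prod>l<k. (if l < j then V l else if l = j then (\<lambda>i. U l i - V l i) else U l) (is ! l)))"
    unfolding tele_prod sum_distrib_left
    by (intro sum.cong refl arg_cong2[where f="(*)"] prod.cong) auto
  also have "\<dots> = (\<Sum>j<k. FF Delta I N k J (\<lambda>l. if l < j then V l else if l = j then (\<lambda>i. U l i - V l i) else U l))"
    unfolding FF_def by (rule sum.swap)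
  finally show ?thesis .
qed

lemma FF_scale:
  assumes "j < k"
  shows "FF Delta I N k J (U(j := (\<lambda>i. c * w i))) = c * FF Delta I N k J (U(j := w))"
proof -
  have "(\<Prod>l<k. (U(j := (\<lambda>i. c * w i))) l (is ! l)) = c * (\<Prod>l<k. (U(j := w)) l (is ! l))" for "is"
  proof -
    have "(\<Prod>l<k. (U(j := (\<lambda>i. c * w i))) l (is ! l)) = c * w (is ! j) * (\<Prod>l\<in>{..<k} - {j}. U l (is ! l))"
      using assms by (subst prod.remove[of _ j]) (auto intro!: prod.cong)
    moreover have "(\<Prod>l<k. (U(j := w)) l (is ! l)) = w (is ! j) * (\<Prod>l\<in>{..<k} - {j}. U l (is ! l))"
      using assms by (subst prod.remove[of _ j]) (auto intro!: prod.cong)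
    ultimately show ?thesis by simp
  qed
  then show ?thesis unfolding FF_def sum_distrib_left by (intro sum.cong) auto
qed

lemma net_sup:
  assumes B0: "b0 \<in> B" and eta: "\<eta> > 0" "real k * \<eta> \<le> 1/2" and netB: "net \<subseteq> B"
    and round: "\<And>u. u \<in> B \<Longrightarrow> \<exists>v\<in>net. (\<lambda>i. (u i - v i) / \<eta>) \<in> B"
    and bdd: "\<And>U. (\<And>j. j < k \<Longrightarrow> U j \<in> B) \<Longrightarrow> \<bar>FF Delta I N k J U\<bar> \<le> Cb"
    and netb: "\<And>U. (\<And>j. j < k \<Longrightarrow> U j \<in> net) \<Longrightarrow> \<bar>FF Delta I N k J U\<bar> \<le> a"
    and U: "\<And>j. j < k \<Longrightarrow> U j \<in> B"
  shows "\<bar>FF Delta I N k J U\<bar> \<le> 2 * a"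
proof -
  define S where "S = {\<bar>FF Delta I N k J U\<bar> | U. \<forall>j<k. U j \<in> B}"
  have Sne: "S \<noteq> {}" unfolding S_def using B0 by auto
  have Sbdd: "bdd_above S" unfolding S_def using bdd by (auto intro!: bdd_aboveI[of _ Cb])
  define M where "M = Sup S"
  have inS: "\<bar>FF Delta I N k J W\<bar> \<le> M" if "\<And>j. j < k \<Longrightarrow> W j \<in> B" for W
    unfolding M_def by (rule cSup_upper[OF _ Sbdd]) (use that in \<open>auto simp: S_def\<close>)
  have M0: "0 \<le> M" using inS[of "\<lambda>_. b0"] B0 by fastforce
  have key: "\<bar>FF Delta I N k J W\<bar> \<le> a + M / 2" if W: "\<And>j. j < k \<Longrightarrow> W j \<in> B" for W
  proof -
    define V where "V j = (SOME v. v \<in> net \<and> (\<lambda>i. (W j i - v i) / \<eta>) \<in> B)" for j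
    have V: "V j \<in> net \<and> (\<lambda>i. (W j i - V j i) / \<eta>) \<in> B" if "j < k" for j
      unfolding V_def using round[OF W[OF that]] by (rule someI2_bex) auto
    define e where "e j = (\<lambda>i. (W j i - V j i) / \<eta>)" for j
    define W' where "W' j = (\<lambda>l. if l < j then V l else if l = j then e j else W l)" for j
    have eq: "FF Delta I N k J W - FF Delta I N k J V = (\<Sum>j<k. \<eta> * FF Delta I N k J (W' j))"
    proof -
      have "(\<lambda>l. if l < j then V l else if l = j then (\<lambda>i. W l i - V l i) else W l) =
            (W' j)(j := (\<lambda>i. \<eta> * e j i))" for j
        using eta by (auto simp: W'_def e_def fun_eq_iff)
      moreover have "(W' j)(j := e j) = W' j" for j by (auto simp: W'_def fun_eq_iff)
      ultimately show ?thesis unfolding FF_tele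
        by (intro sum.cong refl) (metis FF_scale lessThan_iff)
    qed
    have bW': "\<bar>FF Delta I N k J (W' j)\<bar> \<le> M" if "j < k" for j
      by (rule inS) (use V W netB that in \<open>auto simp: W'_def e_def\<close>)
    have "\<bar>FF Delta I N k J W\<bar> \<le> \<bar>FF Delta I N k J V\<bar> + (\<Sum>j<k. \<bar>\<eta> * FF Delta I N k J (W' j)\<bar>)"
      using eq sum_abs[of "\<lambda>j. \<eta> * FF Delta I N k J (W' j)" "{..<k}"] by linarith
    also have "\<dots> \<le> a + (\<Sum>j<k. \<eta> * M)"
      using eta bW' V by (intro add_mono netb sum_mono) (auto simp: abs_mult)
    also have "(\<Sum>j<k. \<eta> * M) = (real k * \<eta>) * M" by simp
    also have "\<dots> \<le> (1/2) * M" using eta M0 by (intro mult_right_mono) auto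
    finally show ?thesis by simp
  qed
  have "M \<le> a + M / 2"
  proof -
    have "x \<le> a + M / 2" if "x \<in> S" for x
      using that key unfolding S_def by auto
    then show ?thesis unfolding M_def by (intro cSup_least[OF Sne]) (simp add: M_def)
  qed
  then have "M \<le> 2 * a" by simp
  moreover have "\<bar>FF Delta I N k J U\<bar> \<le> M" by (rule inS) (rule U)
  ultimately show ?thesis by simp
qed



lemma sum_lists_prod:
  fixes f :: "nat \<Rightarrow> nat \<Rightarrow> real"
  assumes "\<And>j. j < k \<Longrightarrow> finite (A j)"
  shows "(\<Sum>is\<in>{is. length is = k \<and> (\<forall>j<k. is ! j \<in> A j)}. \<Prod>j<k. f j (is ! j)) = (\<Prod>j<k. \<Sum>i\<in>A j. f j i)"
  using assms
proof (induction k arbitrary: A f)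
  case 0
  then show ?case by simp
next
  case (Suc k)
  let ?T = "{ys. length ys = k \<and> (\<forall>j<k. ys ! j \<in> A (Suc j))}"
  have eq: "{is. length is = Suc k \<and> (\<forall>j<Suc k. is ! j \<in> A j)} = (\<lambda>(x, ys). x # ys) ` (A 0 \<times> ?T)"
  proof (rule set_eqI, rule iffI)
    fix xs assume "xs \<in> {is. length is = Suc k \<and> (\<forall>j<Suc k. is ! j \<in> A j)}"
    then show "xs \<in> (\<lambda>(x, ys). x # ys) ` (A 0 \<times> ?T)"
      by (cases xs) (auto intro!: image_eqI[where x="(hd xs, tl xs)"])
  next
    fix xs assume "xs \<in> (\<lambda>(x, ys). x # ys) ` (A 0 \<times> ?T)"
    then show "xs \<in> {is. length is = Suc k \<and> (\<forall>j<Suc k. is ! j \<in> A j)}"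
      by (auto simp: nth_Cons split: nat.split)
  qed
  have shift: "(\<Prod>j<Suc n. f j ((x # ys) ! j)) = f 0 x * (\<Prod>j<n. f (Suc j) (ys ! j))" for x ys n
    by (simp only: prod.lessThan_Suc_shift) simp
  have inj: "inj_on (\<lambda>(x, ys). x # ys) (A 0 \<times> ?T)" by (auto simp: inj_on_def)
  have "(\<Sum>is\<in>{is. length is = Suc k \<and> (\<forall>j<Suc k. is ! j \<in> A j)}. \<Prod>j<Suc k. f j (is ! j))
      = (\<Sum>(x, ys)\<in>A 0 \<times> ?T. f 0 x * (\<Prod>j<k. f (Suc j) (ys ! j)))"
    unfolding eq by (subst sum.reindex[OF inj]) (auto simp only: shift o_def split: prod.splits intro!: sum.cong)
  also have "\<dots> = (\<Sum>x\<in>A 0. \<Sum>ys\<in>?T. f 0 x * (\<Prod>j<k. f (Suc j) (ys ! j)))"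
    by (rule sum.cartesian_product[symmetric])
  also have "\<dots> = (\<Sum>x\<in>A 0. f 0 x) * (\<Sum>ys\<in>?T. \<Prod>j<k. f (Suc j) (ys ! j))"
    by (simp add: sum_product)
  also have "(\<Sum>ys\<in>?T. \<Prod>j<k. f (Suc j) (ys ! j)) = (\<Prod>j<k. \<Sum>i\<in>A (Suc j). f (Suc j) i)"
    using Suc.IH[of "\<lambda>j. A (Suc j)" "\<lambda>j. f (Suc j)"] Suc.prems by auto
  also have "(\<Sum>x\<in>A 0. f 0 x) * (\<Prod>j<k. \<Sum>i\<in>A (Suc j). f (Suc j) i) = (\<Prod>j<Suc k. \<Sum>i\<in>A j. f j i)"
    by (simp only: prod.lessThan_Suc_shift)
  finally show ?case .
qed

lemma prod_nth_cnt:
  fixes g :: "'s::finite \<Rightarrow> real"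
  shows "(\<Prod>j<length ss. g (ss ! j)) = (\<Prod>s\<in>UNIV. g s ^ count (mset ss) s)"
proof (induction ss)
  case Nil
  then show ?case by simp
next
  case (Cons x ss)
  have "(\<Prod>j<length (x # ss). g ((x # ss) ! j)) = g x * (\<Prod>j<length ss. g (ss ! j))"
    unfolding length_Cons prod.lessThan_Suc_shift by simp
  also have "\<dots> = (\<Prod>s\<in>UNIV. (if s = x then g s else 1)) * (\<Prod>s\<in>UNIV. g s ^ count (mset ss) s)"
    using Cons by simp
  also have "\<dots> = (\<Prod>s\<in>UNIV. (if s = x then g s else 1) * g s ^ count (mset ss) s)"
    by (simp add: prod.distrib)
  also have "\<dots> = (\<Prod>s\<in>UNIV. g s ^ count (mset (x # ss)) s)"
    by (intro prod.cong) auto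
  finally show ?case .
qed

locale spart =
  fixes I :: "nat \<Rightarrow> 's::finite \<Rightarrow> nat set" and N :: nat
  assumes disj: "\<And>s s'. s \<noteq> s' \<Longrightarrow> I N s \<inter> I N s' = {}"
    and cover: "(\<Union>s. I N s) = {1..N}"
begin

definition sp :: "nat \<Rightarrow> 's" where "sp i = (SOME s. i \<in> I N s)"

lemma I_sub: "I N s \<subseteq> {1..N}" using cover by auto

lemma fin_I: "finite (I N s)" using I_sub finite_subset by blast

lemma sp_in: "i \<in> {1..N} \<Longrightarrow> i \<in> I N (sp i)"
  unfolding sp_def using cover by (metis UN_E someI_ex)

lemma sp_eq: "i \<in> I N s \<Longrightarrow> sp i = s"
  using sp_in[of i] I_sub disj by blast

lemma Nsp_le: "Nsp I N s \<le> N"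
  unfolding Nsp_def using card_mono[OF _ I_sub[of s]] by simp

lemma sc_eq:
  assumes "set is \<subseteq> {1..N}"
  shows "species_count I N is s = count (mset (map sp is)) s"
proof -
  have "species_count I N is s = length (filter (\<lambda>i. i \<in> I N s) is)"
    unfolding species_count_def by (simp add: length_filter_conv_card)
  also have "filter (\<lambda>i. i \<in> I N s) is = filter (\<lambda>i. s = sp i) is"
    using assms by (intro filter_cong refl) (metis sp_eq sp_in subsetD)
  also have "length \<dots> = count (mset (map sp is)) s"
    by (induction "is") auto
  finally show ?thesis .
qed

lemma Didx_sq:
  assumes "set is \<subseteq> {1..N}"
  shows "(Delta_idx Delta I N is)\<^sup>2 = (Delta (count (mset (map sp is))))\<^sup>2
     * (\<Prod>s\<in>UNIV. fact (count (mset (map sp is)) s)) / fact (length is)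
     * (\<Prod>j<length is. inverse (real (Nsp I N (sp (is ! j)))))"
proof -
  have sc: "species_count I N is = count (mset (map sp is))"
    using sc_eq[OF assms] by auto
  have "(\<Prod>j<length is. inverse (real (Nsp I N (sp (is ! j)))))
      = (\<Prod>j<length (map sp is). inverse (real (Nsp I N (map sp is ! j))))"
    by simp
  also have "\<dots> = (\<Prod>s\<in>UNIV. inverse (real (Nsp I N s)) ^ count (mset (map sp is)) s)"
    by (rule prod_nth_cnt)
  finally have eq: "(\<Prod>j<length is. inverse (real (Nsp I N (sp (is ! j))))) = \<dots>" .
  show ?thesis
    unfolding Delta_idx_def Let_def sc eq
    by (subst real_sqrt_pow2) (auto intro!: mult_nonneg_nonneg divide_nonneg_nonneg prod_nonneg)
qed

end

context spart begin

lemma fiber_eq: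
  assumes "length ss = k"
  shows "{is \<in> Ik N k. map sp is = ss} = {is. length is = k \<and> (\<forall>j<k. is ! j \<in> I N (ss ! j))}"
proof (rule set_eqI, rule iffI)
  fix xs assume "xs \<in> {is \<in> Ik N k. map sp is = ss}"
  then have xs: "length xs = k" "set xs \<subseteq> {1..N}" "map sp xs = ss" by (auto simp: Ik_def)
  have "xs ! j \<in> I N (ss ! j)" if "j < k" for j
  proof -
    have "xs ! j \<in> {1..N}" using xs that nth_mem by blast
    then show ?thesis using sp_in xs that by auto
  qed
  with xs show "xs \<in> {is. length is = k \<and> (\<forall>j<k. is ! j \<in> I N (ss ! j))}" by auto
next
  fix xs assume "xs \<in> {is. length is = k \<and> (\<forall>j<k. is ! j \<in> I N (ss ! j))}"
  then have xs: "length xs = k" "\<And>j. j < k \<Longrightarrow> xs ! j \<in> I N (ss ! j)" by auto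
  have "set xs \<subseteq> {1..N}"
  proof
    fix i assume "i \<in> set xs"
    then obtain j where "j < length xs" "xs ! j = i" by (auto simp: in_set_conv_nth)
    then show "i \<in> {1..N}" using xs I_sub by blast
  qed
  moreover have "map sp xs = ss"
    using xs assms by (intro nth_equalityI) (auto intro: sp_eq)
  ultimately show "xs \<in> {is \<in> Ik N k. map sp is = ss}" using xs by (auto simp: Ik_def)
qed

lemma species_sum_le1:
  assumes "u \<in> Mbar I N"
  shows "(\<Sum>i\<in>I N s. (u i)\<^sup>2 * inverse (real (Nsp I N s))) \<le> 1"
proof (cases "Nsp I N s = 0")
  case True
  then have "I N s = {}" using fin_I unfolding Nsp_def by simp
  then show ?thesis by simp
next
  case False
  have "(\<Sum>i\<in>I N s. (u i)\<^sup>2 * inverse (real (Nsp I N s))) = (\<Sum>i\<in>I N s. (u i)\<^sup>2) / real (Nsp I N s)"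
    by (simp add: sum_distrib_right divide_inverse)
  also have "\<dots> \<le> 1" using assms False by (auto simp: Mbar_def)
  finally show ?thesis .
qed

lemma perm_count:
  fixes A :: "'s multiset"
  assumes "size A = k"
  shows "real (card (permutations_of_multiset A)) * (\<Prod>s\<in>UNIV. fact (count A s)) / fact k = 1"
proof -
  have "(\<Prod>s\<in>UNIV. fact (count A s) :: real) = (\<Prod>s\<in>set_mset A. fact (count A s))"
    by (rule prod.mono_neutral_right) (auto simp: not_in_iff)
  moreover have "card (permutations_of_multiset A) * (\<Prod>x\<in>set_mset A. fact (count A x)) = (fact (size A) :: nat)"
    by (rule card_permutations_of_multiset_aux)
  then have "real (card (permutations_of_multiset A) * (\<Prod>x\<in>set_mset A. fact (count A x))) = real (fact (size A))"
    by (rule arg_cong)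
  then have "real (card (permutations_of_multiset A)) * (\<Prod>x\<in>set_mset A. fact (count A x)) = fact k"
    using assms by (simp only: of_nat_mult of_nat_prod of_nat_fact)
  ultimately show ?thesis by simp
qed

lemma var_bound:
  assumes U: "\<And>j. j < k \<Longrightarrow> U j \<in> Mbar I N"
  shows "(\<Sum>is\<in>Ik N k. (Delta_idx Delta I N is * (\<Prod>j<k. U j (is ! j)))\<^sup>2)
     \<le> (\<Sum>A\<in>mset ` {ss. length ss = k}. (Delta (count A))\<^sup>2)"
proof -
  define T where "T = {ss :: 's list. length ss = k}"
  have finT: "finite T" unfolding T_def using finite_lists_length_eq[of "UNIV :: 's set" k] by simp
  define G where "G ss = (Delta (count (mset ss)))\<^sup>2 * (\<Prod>s\<in>UNIV. fact (count (mset ss) s)) / fact k" for ss :: "'s list"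
  define w where "w j i = (U j i)\<^sup>2 * inverse (real (Nsp I N (sp i)))" for j i
  have G0: "G ss \<ge> 0" for ss unfolding G_def by (intro divide_nonneg_nonneg mult_nonneg_nonneg prod_nonneg) auto
  have trm: "(Delta_idx Delta I N is * (\<Prod>j<k. U j (is ! j)))\<^sup>2 = G (map sp is) * (\<Prod>j<k. w j (is ! j))"
    if "is \<in> Ik N k" for "is"
  proof -
    have len: "length is = k" and st: "set is \<subseteq> {1..N}" using that by (auto simp: Ik_def)
    have "(Delta_idx Delta I N is * (\<Prod>j<k. U j (is ! j)))\<^sup>2 = (Delta_idx Delta I N is)\<^sup>2 * (\<Prod>j<k. (U j (is ! j))\<^sup>2)"
      by (simp add: power_mult_distrib prod_power_distrib)
    also have "\<dots> = G (map sp is) * ((\<Prod>j<k. inverse (real (Nsp I N (sp (is ! j))))) * (\<Prod>j<k. (U j (is ! j))\<^sup>2))"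
      unfolding Didx_sq[OF st] G_def len by simp
    also have "\<dots> = G (map sp is) * (\<Prod>j<k. w j (is ! j))"
      unfolding w_def by (simp add: prod.distrib mult.commute)
    finally show ?thesis .
  qed
  have "(\<Sum>is\<in>Ik N k. (Delta_idx Delta I N is * (\<Prod>j<k. U j (is ! j)))\<^sup>2)
      = (\<Sum>is\<in>Ik N k. G (map sp is) * (\<Prod>j<k. w j (is ! j)))"
    by (rule sum.cong) (auto simp: trm)
  also have "\<dots> = (\<Sum>ss\<in>T. \<Sum>is\<in>{is \<in> Ik N k. map sp is = ss}. G (map sp is) * (\<Prod>j<k. w j (is ! j)))"
    by (rule sum.group[symmetric, OF finite_Ik finT]) (auto simp: T_def Ik_def)
  also have "\<dots> \<le> (\<Sum>ss\<in>T. G ss)"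
  proof (rule sum_mono)
    fix ss assume ss: "ss \<in> T"
    then have len: "length ss = k" by (simp add: T_def)
    have "(\<Sum>is\<in>{is \<in> Ik N k. map sp is = ss}. G (map sp is) * (\<Prod>j<k. w j (is ! j)))
       = G ss * (\<Sum>is\<in>{is. length is = k \<and> (\<forall>j<k. is ! j \<in> I N (ss ! j))}.
             \<Prod>j<k. (U j (is ! j))\<^sup>2 * inverse (real (Nsp I N (ss ! j))))"
      unfolding fiber_eq[OF len, symmetric] sum_distrib_left
      by (intro sum.cong refl) (auto simp: w_def Ik_def intro!: prod.cong)
    also have "\<dots> = G ss * (\<Prod>j<k. \<Sum>i\<in>I N (ss ! j). (U j i)\<^sup>2 * inverse (real (Nsp I N (ss ! j))))"
      by (subst sum_lists_prod) (auto simp: fin_I)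
    also have "\<dots> \<le> G ss * 1"
      using U by (intro mult_left_mono G0 prod_le_1 conjI species_sum_le1 sum_nonneg) auto
    finally show "(\<Sum>is\<in>{is \<in> Ik N k. map sp is = ss}. G (map sp is) * (\<Prod>j<k. w j (is ! j))) \<le> G ss"
      by simp
  qed
  also have "(\<Sum>ss\<in>T. G ss) = (\<Sum>A\<in>mset ` T. \<Sum>ss\<in>{ss \<in> T. mset ss = A}. G ss)"
    by (rule sum.group[symmetric]) (auto simp: finT)
  also have "\<dots> = (\<Sum>A\<in>mset ` T. (Delta (count A))\<^sup>2)"
  proof (rule sum.cong[OF refl])
    fix A assume "A \<in> mset ` T"
    then have sz: "size A = k" by (auto simp: T_def)
    have eqA: "{ss \<in> T. mset ss = A} = permutations_of_multiset A"
      using sz by (auto simp: T_def permutations_of_multiset_def)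
    have "(\<Sum>ss\<in>{ss \<in> T. mset ss = A}. G ss) = (\<Sum>ss\<in>permutations_of_multiset A. (Delta (count A))\<^sup>2 * (\<Prod>s\<in>UNIV. fact (count A s)) / fact k)"
      unfolding eqA G_def by (intro sum.cong refl) (auto simp: permutations_of_multiset_def)
    also have "\<dots> = (Delta (count A))\<^sup>2 * (real (card (permutations_of_multiset A)) * (\<Prod>s\<in>UNIV. fact (count A s)) / fact k)"
      by simp
    also have "\<dots> = (Delta (count A))\<^sup>2" using perm_count[OF sz] by simp
    finally show "(\<Sum>ss\<in>{ss \<in> T. mset ss = A}. G ss) = (Delta (count A))\<^sup>2" .
  qed
  finally show ?thesis by (simp add: T_def)
qed

end

lemma sum_count_mset: "(\<Sum>s\<in>(UNIV::'s::finite set). count (mset ss) s) = length ss"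
proof (induction ss)
  case Nil
  then show ?case by simp
next
  case (Cons x ss)
  have "(\<Sum>s\<in>(UNIV::'s set). count (mset (x # ss)) s) = (\<Sum>s\<in>UNIV. (if s = x then 1 else 0) + count (mset ss) s)"
    by (intro sum.cong) auto
  also have "\<dots> = 1 + length ss" using Cons by (simp add: sum.distrib)
  finally show ?case by simp
qed

lemma xi_bound:
  fixes Delta :: "('s::finite \<Rightarrow> nat) \<Rightarrow> real"
  assumes sm: "(\<lambda>p. (Delta p)\<^sup>2 * (\<Prod>s\<in>UNIV. (1 + \<epsilon>) ^ p s)) summable_on Pset"
    and eps: "\<epsilon> > 0" and k: "k \<ge> 1"
  shows "(\<Sum>A\<in>mset ` {ss::'s list. length ss = k}. (Delta (count A))\<^sup>2)
     \<le> infsum (\<lambda>p. (Delta p)\<^sup>2 * (\<Prod>s\<in>UNIV. (1 + \<epsilon>) ^ p s)) Pset / (1 + \<epsilon>) ^ k"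
proof -
  define f where "f p = (Delta p)\<^sup>2 * (\<Prod>s\<in>UNIV. (1 + \<epsilon>) ^ p s)" for p :: "'s \<Rightarrow> nat"
  define F where "F = mset ` {ss::'s list. length ss = k}"
  have finF: "finite F" unfolding F_def
    using finite_lists_length_eq[of "UNIV :: 's set" k] by simp
  have fA: "f (count A) = (Delta (count A))\<^sup>2 * (1 + \<epsilon>) ^ k" if "A \<in> F" for A
  proof -
    obtain ss where ss: "A = mset ss" "length ss = k" using \<open>A \<in> F\<close> by (auto simp: F_def)
    have "(\<Prod>s\<in>UNIV. (1 + \<epsilon>) ^ count A s) = (1 + \<epsilon>) ^ (\<Sum>s\<in>UNIV. count A s)"
      by (simp add: power_sum)
    also have "(\<Sum>s\<in>UNIV. count A s) = k" using ss sum_count_mset[of ss] by simp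
    finally show ?thesis by (simp add: f_def)
  qed
  have inj: "inj_on count F" by (auto simp: inj_on_def multiset_eqI)
  have sub: "count ` F \<subseteq> Pset"
  proof
    fix p assume "p \<in> count ` F"
    then obtain ss where "p = count (mset ss)" "length ss = k" by (auto simp: F_def)
    then have "(\<Sum>s\<in>UNIV. p s) = k" using sum_count_mset[of ss] by simp
    then show "p \<in> Pset" using k by (simp add: Pset_def)
  qed
  have "(\<Sum>A\<in>F. (Delta (count A))\<^sup>2) * (1 + \<epsilon>) ^ k = (\<Sum>A\<in>F. f (count A))"
    by (simp add: sum_distrib_right fA)
  also have "\<dots> = (\<Sum>p\<in>count ` F. f p)" by (simp add: sum.reindex[OF inj])
  also have "\<dots> = infsum f (count ` F)" using finF by simp
  also have "\<dots> \<le> infsum f Pset"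
  proof (rule infsum_mono_neutral)
    show "f summable_on count ` F" using finF by (auto intro: summable_on_finite)
    show "f summable_on Pset" using sm unfolding f_def[abs_def] .
  qed (use sub eps in \<open>auto simp: f_def intro!: mult_nonneg_nonneg prod_nonneg\<close>)
  finally have "(\<Sum>A\<in>F. (Delta (count A))\<^sup>2) * (1 + \<epsilon>) ^ k \<le> infsum f Pset" .
  moreover have "infsum f Pset = infsum (\<lambda>p. (Delta p)\<^sup>2 * (\<Prod>s\<in>UNIV. (1 + \<epsilon>) ^ p s)) Pset"
    unfolding f_def[abs_def] ..
  ultimately show ?thesis using eps by (simp add: F_def pos_le_divide_eq)
qed



definition trr :: "real \<Rightarrow> real" where "trr x = sgn x * of_int \<lfloor>\<bar>x\<bar>\<rfloor>"

lemma trr_abs: "\<bar>trr x\<bar> \<le> \<bar>x\<bar>"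
  unfolding trr_def by (cases "x = 0") (auto simp: abs_mult sgn_if)

lemma trr_err: "\<bar>x - trr x\<bar> \<le> 1"
proof (cases "x \<ge> 0")
  case True
  then show ?thesis unfolding trr_def
    by (cases "x = 0") (auto simp: sgn_if, linarith+)
next
  case False
  then show ?thesis unfolding trr_def
    by (auto simp: sgn_if, linarith+)
qed

lemma trr_int: "\<exists>m::int. trr x = of_int m"
  unfolding trr_def by (auto simp: sgn_if intro: exI[of _ "\<lfloor>\<bar>x\<bar>\<rfloor>"] exI[of _ "- \<lfloor>\<bar>x\<bar>\<rfloor>"])

lemma sum_half_pow: "(\<Sum>j\<in>{-int M..int M}. (1/2::real) ^ nat \<bar>j\<bar>) = 3 - 2 * (1/2) ^ M"
proof (induction M)
  case 0
  then show ?case by simp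
next
  case (Suc M)
  have eq: "{-int (Suc M)..int (Suc M)} = insert (- int (Suc M)) (insert (int (Suc M)) {-int M..int M})"
    by auto
  have "(\<Sum>j\<in>{-int (Suc M)..int (Suc M)}. (1/2::real) ^ nat \<bar>j\<bar>) =
      (1/2) ^ Suc M + (1/2) ^ Suc M + (\<Sum>j\<in>{-int M..int M}. (1/2::real) ^ nat \<bar>j\<bar>)"
  proof -
    have h1: "nat \<bar>- int (Suc M)\<bar> = Suc M" "nat \<bar>int (Suc M)\<bar> = Suc M" by simp_all
    show ?thesis unfolding eq
      by (subst sum.insert, simp, simp, subst sum.insert, simp, simp) (simp only: h1 add.assoc)
  qed
  also have "\<dots> = 3 - 2 * (1/2) ^ Suc M" using Suc by simp
  finally show ?case .
qed

lemma card_l1: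
  fixes A :: "nat set"
  assumes A: "finite A"
  shows "real (card {m \<in> A \<rightarrow>\<^sub>E (UNIV :: int set). (\<Sum>i\<in>A. \<bar>m i\<bar>) \<le> int M}) \<le> 2 ^ M * 3 ^ card A"
proof -
  define C where "C = {m \<in> A \<rightarrow>\<^sub>E (UNIV :: int set). (\<Sum>i\<in>A. \<bar>m i\<bar>) \<le> int M}"
  define D where "D = A \<rightarrow>\<^sub>E {-int M..int M}"
  have CD: "C \<subseteq> D"
  proof
    fix m assume "m \<in> C"
    then have m: "m \<in> A \<rightarrow>\<^sub>E UNIV" "(\<Sum>i\<in>A. \<bar>m i\<bar>) \<le> int M" by (auto simp: C_def)
    have bnd: "\<bar>m i\<bar> \<le> int M" if "i \<in> A" for i
      using m(2) member_le_sum[of i A "\<lambda>i. \<bar>m i\<bar>"] that A by auto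
    have "m i \<in> {-int M..int M}" if "i \<in> A" for i using bnd[OF that] by (simp add: abs_le_iff)
    then show "m \<in> D" unfolding D_def
      by (intro PiE_I) (auto intro: PiE_arb[OF m(1)])
  qed
  have finD: "finite D" unfolding D_def using A by (intro finite_PiE) auto
  have finC: "finite C" using finite_subset[OF CD finD] .
  have "real (card C) = (\<Sum>m\<in>C. 1)" by simp
  also have "\<dots> \<le> (\<Sum>m\<in>C. 2 ^ M * (\<Prod>i\<in>A. (1/2::real) ^ nat \<bar>m i\<bar>))"
  proof (rule sum_mono)
    fix m assume "m \<in> C"
    then have s0: "(\<Sum>i\<in>A. \<bar>m i\<bar>) \<le> int M" unfolding C_def by auto
    have "int (\<Sum>i\<in>A. nat \<bar>m i\<bar>) = (\<Sum>i\<in>A. \<bar>m i\<bar>)" by (simp add: of_nat_sum)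
    with s0 have s: "(\<Sum>i\<in>A. nat \<bar>m i\<bar>) \<le> M" by linarith
    have "(\<Prod>i\<in>A. (1/2::real) ^ nat \<bar>m i\<bar>) = (1/2) ^ (\<Sum>i\<in>A. nat \<bar>m i\<bar>)"
      by (simp add: power_sum)
    also have "\<dots> \<ge> (1/2) ^ M" using s by (intro power_decreasing) auto
    finally have "(1/2::real) ^ M \<le> (\<Prod>i\<in>A. (1/2::real) ^ nat \<bar>m i\<bar>)" .
    then have "2 ^ M * (1/2::real) ^ M \<le> 2 ^ M * (\<Prod>i\<in>A. (1/2::real) ^ nat \<bar>m i\<bar>)" by simp
    then show "1 \<le> 2 ^ M * (\<Prod>i\<in>A. (1/2::real) ^ nat \<bar>m i\<bar>)" by (simp add: power_one_over)
  qed
  also have "\<dots> \<le> (\<Sum>m\<in>D. 2 ^ M * (\<Prod>i\<in>A. (1/2::real) ^ nat \<bar>m i\<bar>))"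
    by (rule sum_mono2[OF finD CD]) (auto intro!: mult_nonneg_nonneg prod_nonneg)
  also have "\<dots> = 2 ^ M * (\<Prod>i\<in>A. \<Sum>j\<in>{-int M..int M}. (1/2::real) ^ nat \<bar>j\<bar>)"
    unfolding D_def sum_distrib_left[symmetric] by (subst prod_sum_PiE) (auto simp: A)
  also have "\<dots> \<le> 2 ^ M * (\<Prod>i\<in>A. 3)"
    unfolding sum_half_pow using power_le_one[of "1/2::real" M] by (intro mult_left_mono prod_mono) auto
  finally show ?thesis by (simp add: C_def)
qed

context spart begin

definition rnd :: "real \<Rightarrow> (nat \<Rightarrow> real) \<Rightarrow> nat \<Rightarrow> real" where
  "rnd \<eta> u = (\<lambda>i. if i \<in> {1..N} then \<eta> * trr (u i / \<eta>) else 0)"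

definition net :: "real \<Rightarrow> (nat \<Rightarrow> real) set" where
  "net \<eta> = {v \<in> Mbar I N. \<forall>i. (i \<notin> {1..N} \<longrightarrow> v i = 0) \<and> (i \<in> {1..N} \<longrightarrow> (\<exists>m::int. v i = \<eta> * of_int m))}"

lemma net_sub: "net \<eta> \<subseteq> Mbar I N" unfolding net_def by auto

lemma rnd_net:
  assumes eta: "\<eta> > 0" and u: "u \<in> Mbar I N"
  shows "rnd \<eta> u \<in> net \<eta>"
proof -
  have le: "(rnd \<eta> u i)\<^sup>2 \<le> (u i)\<^sup>2" for i
  proof -
    have "\<bar>\<eta> * trr (u i / \<eta>)\<bar> = \<eta> * \<bar>trr (u i / \<eta>)\<bar>" using eta by (simp add: abs_mult)
    also have "\<dots> \<le> \<eta> * \<bar>u i / \<eta>\<bar>" using eta trr_abs[of "u i / \<eta>"] by (intro mult_left_mono) auto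
    also have "\<dots> = \<bar>u i\<bar>" using eta by simp
    finally have ab0: "\<bar>\<eta> * trr (u i / \<eta>)\<bar> \<le> \<bar>u i\<bar>" .
    have ab: "\<bar>rnd \<eta> u i\<bar> \<le> \<bar>u i\<bar>"
    proof (cases "i \<in> {1..N}")
      case True then show ?thesis using ab0 by (simp add: rnd_def)
    next
      case False
      then have "rnd \<eta> u i = 0" unfolding rnd_def by (simp only: if_False)
      then show ?thesis by simp
    qed
    then show ?thesis using abs_le_square_iff by blast
  qed
  have "rnd \<eta> u \<in> Mbar I N"
    unfolding Mbar_def
  proof (safe)
    fix s
    have "(\<Sum>i\<in>I N s. (rnd \<eta> u i)\<^sup>2) \<le> (\<Sum>i\<in>I N s. (u i)\<^sup>2)" by (intro sum_mono le)
    also have "\<dots> \<le> real (Nsp I N s)" using u by (auto simp: Mbar_def)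
    finally show "(\<Sum>i\<in>I N s. (rnd \<eta> u i)\<^sup>2) \<le> real (Nsp I N s)" .
  qed
  moreover have "\<exists>m::int. rnd \<eta> u i = \<eta> * of_int m" if "i \<in> {1..N}" for i
    using that trr_int[of "u i / \<eta>"] unfolding rnd_def by auto
  ultimately show ?thesis unfolding net_def by (auto simp: rnd_def)
qed

lemma rnd_err:
  assumes eta: "\<eta> > 0" and u: "u \<in> Mbar I N"
  shows "(\<lambda>i. (u i - rnd \<eta> u i) / \<eta>) \<in> Mbar I N"
  unfolding Mbar_def
proof (safe)
  fix s
  have "((u i - rnd \<eta> u i) / \<eta>)\<^sup>2 \<le> 1" if "i \<in> I N s" for i
  proof -
    have "i \<in> {1..N}" using that I_sub by blast
    then have "(u i - rnd \<eta> u i) / \<eta> = u i / \<eta> - trr (u i / \<eta>)"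
      using eta by (simp add: rnd_def diff_divide_distrib)
    then have "\<bar>(u i - rnd \<eta> u i) / \<eta>\<bar> \<le> 1" using trr_err by simp
    then show ?thesis by (simp add: abs_le_square_iff[symmetric] abs_square_le_1)
  qed
  then have "(\<Sum>i\<in>I N s. ((u i - rnd \<eta> u i) / \<eta>)\<^sup>2) \<le> (\<Sum>i\<in>I N s. 1)" by (intro sum_mono) auto
  also have "\<dots> = real (Nsp I N s)" by (simp add: Nsp_def)
  finally show "(\<Sum>i\<in>I N s. ((u i - rnd \<eta> u i) / \<eta>)\<^sup>2) \<le> real (Nsp I N s)" .
qed

lemma sum_part: "(\<Sum>i\<in>{1..N}. f i) = (\<Sum>s\<in>UNIV. \<Sum>i\<in>I N s. f i)"
proof -
  have "(\<Sum>i\<in>{1..N}. f i) = sum f (\<Union> (I N ` UNIV))" using cover by simp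
  also have "\<dots> = (\<Sum>s\<in>UNIV. sum f (I N s))"
    by (rule sum.UNION_disjoint) (auto simp: fin_I disj)
  finally show ?thesis .
qed

lemma card_part: "(\<Sum>s\<in>UNIV. real (Nsp I N s)) = real N"
proof -
  have "(\<Sum>s\<in>UNIV. real (Nsp I N s)) = (\<Sum>i\<in>{1..N}. 1)"
    unfolding sum_part by (simp add: Nsp_def)
  then show ?thesis by simp
qed

lemma sum_sq_le_N:
  assumes "v \<in> Mbar I N"
  shows "(\<Sum>i\<in>{1..N}. (v i)\<^sup>2) \<le> real N"
proof -
  have "(\<Sum>i\<in>{1..N}. (v i)\<^sup>2) = (\<Sum>s\<in>UNIV. \<Sum>i\<in>I N s. (v i)\<^sup>2)" by (rule sum_part)
  also have "\<dots> \<le> (\<Sum>s\<in>UNIV. real (Nsp I N s))" using assms by (intro sum_mono) (auto simp: Mbar_def)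
  also have "\<dots> = real N" by (rule card_part)
  finally show ?thesis .
qed

lemma net_card:
  assumes eta: "\<eta> > 0" and NM: "real N \<le> real M * \<eta>"
  shows "finite (net \<eta>) \<and> real (card (net \<eta>)) \<le> 2 ^ M * 3 ^ N"
proof -
  define C where "C = {m \<in> {1..N} \<rightarrow>\<^sub>E (UNIV :: int set). (\<Sum>i\<in>{1..N}. \<bar>m i\<bar>) \<le> int M}"
  define \<phi> where "\<phi> v = restrict (\<lambda>i. \<lfloor>v i / \<eta>\<rfloor>) {1..N}" for v :: "nat \<Rightarrow> real"
  have exact: "v i = \<eta> * of_int \<lfloor>v i / \<eta>\<rfloor>" if "v \<in> net \<eta>" "i \<in> {1..N}" for v i
  proof -
    have "\<forall>i. (i \<in> {1..N} \<longrightarrow> (\<exists>m::int. v i = \<eta> * of_int m))" using that(1) unfolding net_def by blast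
    then have "\<exists>m::int. v i = \<eta> * of_int m" using that(2) by blast
    then obtain m :: int where "v i = \<eta> * of_int m" by blast
    then show ?thesis using eta by simp
  qed
  have inj: "inj_on \<phi> (net \<eta>)"
  proof (rule inj_onI)
    fix v w assume v: "v \<in> net \<eta>" and w: "w \<in> net \<eta>" and eq: "\<phi> v = \<phi> w"
    show "v = w"
    proof
      fix i show "v i = w i"
      proof (cases "i \<in> {1..N}")
        case True
        have "\<phi> v i = \<phi> w i" using eq by simp
        then have fl: "\<lfloor>v i / \<eta>\<rfloor> = \<lfloor>w i / \<eta>\<rfloor>" using True unfolding \<phi>_def by simp
        have "v i = \<eta> * of_int \<lfloor>v i / \<eta>\<rfloor>" by (rule exact[OF v True])
        also have "\<dots> = \<eta> * of_int \<lfloor>w i / \<eta>\<rfloor>" by (simp only: fl)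
        also have "\<dots> = w i" by (rule exact[OF w True, symmetric])
        finally show ?thesis .
      next
        case False
        then show ?thesis using v w unfolding net_def by auto
      qed
    qed
  qed
  have sub: "\<phi> ` net \<eta> \<subseteq> C"
  proof
    fix m assume "m \<in> \<phi> ` net \<eta>"
    then obtain v where v: "v \<in> net \<eta>" "m = \<phi> v" by auto
    have vM: "v \<in> Mbar I N" using v net_sub by auto
    have "real_of_int (\<Sum>i\<in>{1..N}. \<bar>m i\<bar>) = (\<Sum>i\<in>{1..N}. \<bar>v i\<bar> / \<eta>)"
    proof -
      have "real_of_int \<bar>m i\<bar> = \<bar>v i\<bar> / \<eta>" if "i \<in> {1..N}" for i
      proof -
        have "\<bar>v i\<bar> = \<bar>\<eta> * real_of_int \<lfloor>v i / \<eta>\<rfloor>\<bar>" using exact[OF v(1) that] by (rule arg_cong)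
        also have "\<dots> = \<eta> * \<bar>real_of_int \<lfloor>v i / \<eta>\<rfloor>\<bar>" using eta by (simp add: abs_mult)
        finally have "\<bar>v i\<bar> = \<eta> * \<bar>real_of_int \<lfloor>v i / \<eta>\<rfloor>\<bar>" .
        then show ?thesis using that eta v(2) by (simp add: \<phi>_def)
      qed
      then show ?thesis by (simp add: of_int_sum)
    qed
    also have "\<dots> = (\<Sum>i\<in>{1..N}. \<bar>v i\<bar>) / \<eta>" by (simp add: sum_divide_distrib)
    also have "\<dots> \<le> real N / \<eta>"
    proof -
      have "(\<Sum>i\<in>{1..N}. \<bar>v i\<bar>) \<le> (\<Sum>i\<in>{1..N}. (1 + (v i)\<^sup>2) / 2)"
      proof (rule sum_mono)
        fix i
        have "0 \<le> (\<bar>v i\<bar> - 1)\<^sup>2" by simp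
        then show "\<bar>v i\<bar> \<le> (1 + (v i)\<^sup>2) / 2" by (simp add: power2_eq_square algebra_simps abs_mult_self_eq)
      qed
      also have "\<dots> = (real N + (\<Sum>i\<in>{1..N}. (v i)\<^sup>2)) / 2"
        by (simp add: sum_divide_distrib[symmetric] sum.distrib)
      also have "\<dots> \<le> real N" using sum_sq_le_N[OF vM] by simp
      finally show ?thesis using eta by (simp add: divide_right_mono)
    qed
    also have "\<dots> \<le> real M" using NM eta by (simp add: pos_divide_le_eq)
    finally have "(\<Sum>i\<in>{1..N}. \<bar>m i\<bar>) \<le> int M" by linarith
    moreover have "m \<in> {1..N} \<rightarrow>\<^sub>E UNIV" unfolding v(2) \<phi>_def by auto
    ultimately show "m \<in> C" by (simp add: C_def)
  qed
  have finC: "finite C"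
  proof -
    have "C \<subseteq> {1..N} \<rightarrow>\<^sub>E {-int M..int M}"
    proof
      fix m assume m: "m \<in> C"
      have m1: "(\<Sum>i\<in>{1..N}. \<bar>m i\<bar>) \<le> int M" and m2: "m \<in> {1..N} \<rightarrow>\<^sub>E UNIV"
        using m unfolding C_def by simp_all
      have bnd: "\<bar>m i\<bar> \<le> int M" if "i \<in> {1..N}" for i
      proof -
        have "\<bar>m i\<bar> \<le> (\<Sum>i\<in>{1..N}. \<bar>m i\<bar>)" by (rule member_le_sum) (use that in auto)
        then show ?thesis using m1 by linarith
      qed
      have "m i \<in> {-int M..int M}" if "i \<in> {1..N}" for i using bnd[OF that] by (simp add: abs_le_iff)
      then show "m \<in> {1..N} \<rightarrow>\<^sub>E {-int M..int M}"
        by (intro PiE_I) (auto intro: PiE_arb[OF m2])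
    qed
    moreover have "finite ({1..N} \<rightarrow>\<^sub>E {-int M..int M})" by (intro finite_PiE) auto
    ultimately show ?thesis by (rule finite_subset)
  qed
  have fin: "finite (net \<eta>)" using finite_imageD[OF finite_subset[OF sub finC] inj] .
  have "card (net \<eta>) = card (\<phi> ` net \<eta>)" using card_image[OF inj] by simp
  also have "\<dots> \<le> card C" by (rule card_mono[OF finC sub])
  finally have "real (card (net \<eta>)) \<le> real (card C)" by simp
  also have "\<dots> \<le> 2 ^ M * 3 ^ card {1..N}" unfolding C_def by (rule card_l1) simp
  finally show ?thesis using fin by simp
qed

lemma crude:
  assumes "u \<in> Mbar I N" "i \<in> {1..N}"
  shows "\<bar>u i\<bar> \<le> real N"
proof -
  have "(u i)\<^sup>2 \<le> (\<Sum>j\<in>I N (sp i). (u j)\<^sup>2)"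
    using sp_in[OF assms(2)] fin_I by (intro member_le_sum) auto
  also have "\<dots> \<le> real (Nsp I N (sp i))" using assms(1) by (auto simp: Mbar_def)
  also have "\<dots> \<le> real N" using Nsp_le by simp
  finally have sq: "(u i)\<^sup>2 \<le> real N" .
  have N1: "real N \<ge> 1" using assms(2) by auto
  show ?thesis
  proof (cases "\<bar>u i\<bar> \<le> 1")
    case True then show ?thesis using N1 by linarith
  next
    case False
    then have "\<bar>u i\<bar> * 1 \<le> \<bar>u i\<bar> * \<bar>u i\<bar>" by (intro mult_left_mono) auto
    also have "\<dots> = (u i)\<^sup>2" by (simp add: power2_eq_square abs_mult_self_eq)
    finally show ?thesis using sq by linarith
  qed
qed

lemma FF_crude:
  assumes U: "\<And>j. j < k \<Longrightarrow> U j \<in> Mbar I N"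
  shows "\<bar>FF Delta I N k J U\<bar> \<le> (\<Sum>is\<in>Ik N k. \<bar>Delta_idx Delta I N is * J is\<bar>) * real N ^ k"
proof -
  have "\<bar>FF Delta I N k J U\<bar> \<le> (\<Sum>is\<in>Ik N k. \<bar>Delta_idx Delta I N is * J is * (\<Prod>j<k. U j (is ! j))\<bar>)"
    unfolding FF_def by (rule sum_abs)
  also have "\<dots> \<le> (\<Sum>is\<in>Ik N k. \<bar>Delta_idx Delta I N is * J is\<bar> * real N ^ k)"
  proof (rule sum_mono)
    fix "is" assume "is" : "is \<in> Ik N k"
    have "\<bar>\<Prod>j<k. U j (is ! j)\<bar> = (\<Prod>j<k. \<bar>U j (is ! j)\<bar>)" by (simp add: abs_prod)
    also have "\<dots> \<le> (\<Prod>j<k. real N)"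
    proof (rule prod_mono)
      fix j assume "j \<in> {..<k}"
      then have "is ! j \<in> {1..N}" using "is" unfolding Ik_def by (auto dest!: nth_mem)
      then show "0 \<le> \<bar>U j (is ! j)\<bar> \<and> \<bar>U j (is ! j)\<bar> \<le> real N" using crude U \<open>j \<in> {..<k}\<close> by auto
    qed
    finally have pb: "\<bar>\<Prod>j<k. U j (is ! j)\<bar> \<le> real N ^ k" by simp
    have "\<bar>Delta_idx Delta I N is * J is * (\<Prod>j<k. U j (is ! j))\<bar> = \<bar>Delta_idx Delta I N is * J is\<bar> * \<bar>\<Prod>j<k. U j (is ! j)\<bar>"
      by (rule abs_mult)
    also have "\<dots> \<le> \<bar>Delta_idx Delta I N is * J is\<bar> * real N ^ k" using pb by (intro mult_left_mono) auto
    finally show "\<bar>Delta_idx Delta I N is * J is * (\<Prod>j<k. U j (is ! j))\<bar> \<le> \<bar>Delta_idx Delta I N is * J is\<bar> * real N ^ k" .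
  qed
  also have "\<dots> = (\<Sum>is\<in>Ik N k. \<bar>Delta_idx Delta I N is * J is\<bar>) * real N ^ k"
    by (simp add: sum_distrib_right)
  finally show ?thesis .
qed

end



lemma summ_sq:
  fixes y :: real
  assumes "0 \<le> y" "y < 1"
  shows "summable (\<lambda>m. (real m + 1)\<^sup>2 * y ^ m)"
proof -
  have s1: "summable (\<lambda>n. diffs (\<lambda>_. 1::real) n * x ^ n)" if "norm x < 1" for x :: real
    by (rule termdiff_converges[of x 1]) (use that in auto)
  have s2: "summable (\<lambda>n. diffs (diffs (\<lambda>_. 1::real)) n * y ^ n)"
    by (rule termdiff_converges[of y 1]) (use assms s1 in auto)
  have eq: "diffs (diffs (\<lambda>_. 1::real)) n = (real n + 1) * (real n + 2)" for n
    by (simp add: diffs_def algebra_simps)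
  show ?thesis
  proof (rule summable_comparison_test[OF _ s2])
    show "\<exists>N. \<forall>n\<ge>N. norm ((real n + 1)\<^sup>2 * y ^ n) \<le> diffs (diffs (\<lambda>_. 1::real)) n * y ^ n"
      using assms by (intro exI[of _ 0] allI impI) (auto simp: eq power2_eq_square intro!: mult_right_mono mult_left_mono)
  qed
qed

lemma two_pow_exp: "(2::real) ^ n \<le> exp (real n)"
proof -
  have "(2::real) \<le> exp 1" using exp_ge_add_one_self[of 1] by simp
  then have "(2::real) ^ n \<le> exp 1 ^ n" by (intro power_mono) auto
  also have "\<dots> = exp (real n)" by (simp add: exp_of_nat_mult[symmetric])
  finally show ?thesis .
qed

lemma bound_arith:
  fixes k N :: nat and t C :: real
  assumes k: "k \<ge> 1" and N: "N \<ge> 1" and t: "t > 0" and C: "0 \<le> C" "C \<le> 2 ^ (2 * k * N) * 3 ^ N"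
  shows "C ^ k * (2 * exp (- (real N * (t + 7) * (real k)\<^sup>2))) \<le> 2 * exp (- t * real N) * exp (-3) ^ k"
proof -
  have "(3::real) ^ N \<le> 4 ^ N" by (rule power_mono) auto
  then have "(2::real) ^ (2 * k * N) * 3 ^ N \<le> 2 ^ (2 * k * N) * 4 ^ N" by (intro mult_left_mono) auto
  then have "C \<le> 2 ^ (2 * k * N) * 4 ^ N" using C(2) by linarith
  also have "\<dots> = 2 ^ (2 * k * N + 2 * N)" by (simp add: power_add power_mult)
  also have "\<dots> \<le> (2::real) ^ (4 * k * N)" using k by (intro power_increasing) auto
  finally have "C ^ k \<le> ((2::real) ^ (4 * k * N)) ^ k" using C by (intro power_mono) auto
  also have "\<dots> = 2 ^ (4 * k * N * k)" by (simp add: power_mult)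
  also have "\<dots> \<le> exp (real (4 * k * N * k))" by (rule two_pow_exp)
  finally have Ck: "C ^ k \<le> exp (4 * real N * (real k)\<^sup>2)" by (simp add: power2_eq_square mult_ac)
  have ex: "4 * real N * (real k)\<^sup>2 + - (real N * (t + 7) * (real k)\<^sup>2) = - (real N * (t + 3) * (real k)\<^sup>2)"
    by (simp add: algebra_simps)
  have "C ^ k * (2 * exp (- (real N * (t + 7) * (real k)\<^sup>2))) \<le> exp (4 * real N * (real k)\<^sup>2) * (2 * exp (- (real N * (t + 7) * (real k)\<^sup>2)))"
    by (intro mult_right_mono Ck) auto
  also have "\<dots> = 2 * exp (4 * real N * (real k)\<^sup>2 + - (real N * (t + 7) * (real k)\<^sup>2))"
    by (simp only: exp_add)
  also have "\<dots> = 2 * exp (- (real N * (t + 3) * (real k)\<^sup>2))" by (simp only: ex)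
  also have "\<dots> \<le> 2 * exp (- t * real N + (-3) * real k)"
  proof -
    have kk: "1 \<le> real k" using k by simp
    have "1 * 1 \<le> real k * real k" using kk by (intro mult_mono) auto
    moreover have "real k * 1 \<le> real k * real k" using kk by (intro mult_left_mono) auto
    ultimately have k1: "(real k)\<^sup>2 \<ge> 1" "(real k)\<^sup>2 \<ge> real k" by (auto simp: power2_eq_square)
    have "t * real N * 1 \<le> t * real N * (real k)\<^sup>2" using k1 t N by (intro mult_left_mono) auto
    moreover have "3 * real k \<le> 3 * real N * (real k)\<^sup>2"
    proof -
      have "real k \<le> (real k)\<^sup>2" using k1 by simp
      also have "\<dots> \<le> real N * (real k)\<^sup>2" using N mult_right_mono[of 1 "real N" "(real k)\<^sup>2"] by simp
      finally show ?thesis by simp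
    qed
    ultimately have "- (real N * (t + 3) * (real k)\<^sup>2) \<le> - t * real N + (-3) * real k"
      by (simp add: algebra_simps)
    then show ?thesis by simp
  qed
  also have "\<dots> = 2 * exp (- t * real N) * exp (-3) ^ k"
  proof -
    have "exp ((-3) * real k) = exp (-3) ^ k" by (simp add: exp_of_nat_mult[symmetric] mult.commute)
    then show ?thesis by (simp only: exp_add mult.assoc)
  qed
  finally show ?thesis .
qed

lemma meas_FF[measurable]: "(\<lambda>J. FF Delta I N k J U) \<in> borel_measurable gauss_space"
  unfolding FF_def by measurable

lemma FF_lin: "FF Delta I N k J U = (\<Sum>is\<in>Ik N k. (Delta_idx Delta I N is * (\<Prod>j<k. U j (is ! j))) * J is)"
  unfolding FF_def by (intro sum.cong) (auto simp: mult_ac)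

lemma (in spart) bad_bound:
  fixes Delta :: "('s \<Rightarrow> nat) \<Rightarrow> real"
  assumes N1: "N \<ge> 1" and t: "t > 0" and eps: "\<epsilon> > 0"
    and sm: "(\<lambda>p. (Delta p)\<^sup>2 * (\<Prod>s\<in>UNIV. (1 + \<epsilon>) ^ p s)) summable_on Pset"
    and K: "K = infsum (\<lambda>p. (Delta p)\<^sup>2 * (\<Prod>s\<in>UNIV. (1 + \<epsilon>) ^ p s)) Pset"
    and V: "V = K + 1" and rho: "\<rho> = 1 / (1 + \<epsilon>)" and c: "c = sqrt (2 * V * (t + 7))"
    and k: "k \<ge> 1"
  shows "measure gauss_space (\<Union>U\<in>PiE {..<k} (\<lambda>_. net (1 / (2 * real k))).
            {J \<in> space gauss_space. sqrt (real N) * (c * real k * sqrt \<rho> ^ k) < \<bar>FF Delta I N k J U\<bar>})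
         \<le> 2 * exp (- t * real N) * exp (-3) ^ k"
proof -
  interpret P: prob_space gauss_space by (rule prob_gauss)
  define \<eta> where "\<eta> = 1 / (2 * real k)"
  have eta: "\<eta> > 0" using k by (simp add: \<eta>_def)
  have "real N \<le> real (2 * k * N) * \<eta>" using k by (simp add: \<eta>_def)
  from net_card[OF eta this] have nc: "finite (net \<eta>)" "real (card (net \<eta>)) \<le> 2 ^ (2 * k * N) * 3 ^ N"
    by auto
  define P where "P = PiE {..<k} (\<lambda>_. net \<eta>)"
  have finP: "finite P" unfolding P_def using nc by (intro finite_PiE) auto
  have cardP: "card P = card (net \<eta>) ^ k" unfolding P_def by (simp add: card_PiE)
  have K0: "K \<ge> 0" unfolding K using eps by (intro infsum_nonneg) (auto intro!: mult_nonneg_nonneg prod_nonneg)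
  have rho0: "\<rho> > 0" using eps by (simp add: rho)
  define v where "v = V * \<rho> ^ k"
  have v0: "v > 0" using K0 rho0 by (simp add: v_def V)
  define a where "a = sqrt (real N) * (c * real k * sqrt \<rho> ^ k)"
  have a0: "a \<ge> 0" using rho0 K0 t by (auto simp: a_def c V intro!: mult_nonneg_nonneg)
  have a2: "a\<^sup>2 / (2 * v) = real N * (t + 7) * (real k)\<^sup>2"
  proof -
    have "(sqrt \<rho> ^ k)\<^sup>2 = \<rho> ^ k" using rho0 by (simp add: power2_eq_square power_mult_distrib[symmetric])
    moreover have "c\<^sup>2 = 2 * V * (t + 7)" using K0 t by (simp add: c V)
    ultimately have "a\<^sup>2 = real N * (2 * V * (t + 7)) * (real k)\<^sup>2 * \<rho> ^ k"
      by (simp add: a_def power_mult_distrib)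
    then show ?thesis using v0 rho0 K0 by (simp add: v_def V field_simps)
  qed
  have each: "measure gauss_space {J \<in> space gauss_space. a < \<bar>FF Delta I N k J U\<bar>} \<le> 2 * exp (- (real N * (t + 7) * (real k)\<^sup>2))"
    if U: "U \<in> P" for U
  proof -
    have UM: "U j \<in> Mbar I N" if "j < k" for j using U that net_sub unfolding P_def by blast
    have "(\<Sum>is\<in>Ik N k. (Delta_idx Delta I N is * (\<Prod>j<k. U j (is ! j)))\<^sup>2)
       \<le> (\<Sum>A\<in>mset ` {ss::'s list. length ss = k}. (Delta (count A))\<^sup>2)"
      by (rule var_bound) (rule UM)
    also have "\<dots> \<le> K / (1 + \<epsilon>) ^ k" unfolding K by (rule xi_bound[OF sm eps k])
    also have "\<dots> = K * \<rho> ^ k" by (simp add: rho power_divide)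
    also have "\<dots> \<le> v" unfolding v_def V using rho0 by (intro mult_right_mono) auto
    finally have var: "(\<Sum>is\<in>Ik N k. (Delta_idx Delta I N is * (\<Prod>j<k. U j (is ! j)))\<^sup>2) \<le> v" .
    have "measure gauss_space {J \<in> space gauss_space. a < \<bar>FF Delta I N k J U\<bar>}
        = measure gauss_space {J \<in> space gauss_space. a < \<bar>\<Sum>is\<in>Ik N k. (Delta_idx Delta I N is * (\<Prod>j<k. U j (is ! j))) * J is\<bar>}"
      by (simp only: FF_lin)
    also have "\<dots> \<le> 2 * exp (- a\<^sup>2 / (2 * v))"
      by (rule tail_two[OF finite_Ik v0 var a0])
    also have "- a\<^sup>2 / (2 * v) = - (real N * (t + 7) * (real k)\<^sup>2)" using a2 by (simp add: minus_divide_left)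
    finally show ?thesis .
  qed
  have "measure gauss_space (\<Union>U\<in>P. {J \<in> space gauss_space. a < \<bar>FF Delta I N k J U\<bar>})
      \<le> (\<Sum>U\<in>P. measure gauss_space {J \<in> space gauss_space. a < \<bar>FF Delta I N k J U\<bar>})"
  proof (rule P.finite_measure_subadditive_finite[OF finP])
    have "{J \<in> space gauss_space. a < \<bar>FF Delta I N k J U\<bar>} \<in> sets gauss_space" for U by measurable
    then show "(\<lambda>U. {J \<in> space gauss_space. a < \<bar>FF Delta I N k J U\<bar>}) ` P \<subseteq> P.events" by auto
  qed
  also have "\<dots> \<le> (\<Sum>U\<in>P. 2 * exp (- (real N * (t + 7) * (real k)\<^sup>2)))"
    by (rule sum_mono) (rule each)
  also have "\<dots> = real (card (net \<eta>)) ^ k * (2 * exp (- (real N * (t + 7) * (real k)\<^sup>2)))"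
    by (simp add: cardP)
  also have "\<dots> \<le> 2 * exp (- t * real N) * exp (-3) ^ k"
    by (rule bound_arith[OF k N1 t]) (use nc in auto)
  finally show ?thesis unfolding P_def a_def \<eta>_def .
qed

context spart begin

lemma zero_Mbar: "(\<lambda>_. 0) \<in> Mbar I N" by (simp add: Mbar_def)

lemma full_bound:
  assumes good: "\<And>k U. k \<ge> 1 \<Longrightarrow> (\<And>j. j < k \<Longrightarrow> U j \<in> net (1 / (2 * real k))) \<Longrightarrow>
                  \<bar>FF Delta I N k J U\<bar> \<le> b k"
    and k: "k \<ge> 1" and U: "\<And>j. j < k \<Longrightarrow> U j \<in> Mbar I N"
  shows "\<bar>FF Delta I N k J U\<bar> \<le> 2 * b k"
proof -
  define \<eta> where "\<eta> = 1 / (2 * real k)"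
  have eta: "\<eta> > 0" "real k * \<eta> \<le> 1/2" using k by (auto simp: \<eta>_def)
  show ?thesis
  proof (rule net_sup[OF zero_Mbar eta net_sub])
    fix u assume "u \<in> Mbar I N"
    then show "\<exists>v\<in>net \<eta>. (\<lambda>i. (u i - v i) / \<eta>) \<in> Mbar I N"
      using rnd_net[OF eta(1)] rnd_err[OF eta(1)] by blast
  next
    fix U assume "\<And>j. j < k \<Longrightarrow> U j \<in> Mbar I N"
    then show "\<bar>FF Delta I N k J U\<bar> \<le> (\<Sum>is\<in>Ik N k. \<bar>Delta_idx Delta I N is * J is\<bar>) * real N ^ k"
      by (rule FF_crude)
  next
    fix U assume "\<And>j. j < k \<Longrightarrow> U j \<in> net \<eta>"
    then show "\<bar>FF Delta I N k J U\<bar> \<le> b k" using good[OF k] unfolding \<eta>_def by blast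
  qed (rule U)
qed

lemma HN_eq: "HN Delta I N J \<omega> = sqrt (real N) * (\<Sum>m. FF Delta I N (Suc m) J (\<lambda>_. \<omega>))"
proof -
  have "(\<lambda>k. \<Sum>is\<in>{is. length is = Suc k \<and> set is \<subseteq> {1..N}}.
            Delta_idx Delta I N is * J is * (\<Prod>j<length is. \<omega> (is ! j))) = (\<lambda>m. FF Delta I N (Suc m) J (\<lambda>_. \<omega>))"
    unfolding FF_def Ik_def by (intro ext sum.cong) auto
  then show ?thesis unfolding HN_def by simp
qed

lemma lip:
  assumes N1: "N \<ge> 1" and a0: "\<And>k. \<alpha> k \<ge> 0"
    and good: "\<And>k U. k \<ge> 1 \<Longrightarrow> (\<And>j. j < k \<Longrightarrow> U j \<in> net (1 / (2 * real k))) \<Longrightarrow>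
                  \<bar>FF Delta I N k J U\<bar> \<le> sqrt (real N) * \<alpha> k"
    and summ: "summable (\<lambda>m. real (Suc m) * \<alpha> (Suc m))"
    and \<sigma>: "\<sigma> \<in> Mbar I N" and \<pi>: "\<pi> \<in> Mbar I N"
  shows "\<bar>HN Delta I N J \<sigma> - HN Delta I N J \<pi>\<bar> / real N
     \<le> 2 * (\<Sum>m. real (Suc m) * \<alpha> (Suc m)) * Max (range (\<lambda>s. sqrt (Rs I N s (\<lambda>i. \<sigma> i - \<pi> i) (\<lambda>i. \<sigma> i - \<pi> i))))"
proof -
  define S where "S = (\<Sum>m. real (Suc m) * \<alpha> (Suc m))"
  define r where "r = Max (range (\<lambda>s. sqrt (Rs I N s (\<lambda>i. \<sigma> i - \<pi> i) (\<lambda>i. \<sigma> i - \<pi> i))))"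
  have S0: "S \<ge> 0" unfolding S_def using a0 by (intro suminf_nonneg summ) auto
  have rge: "sqrt (Rs I N s (\<lambda>i. \<sigma> i - \<pi> i) (\<lambda>i. \<sigma> i - \<pi> i)) \<le> r" for s
    unfolding r_def by (rule Max_ge) auto
  have Rs0: "Rs I N s f f \<ge> 0" for s f unfolding Rs_def by (auto intro!: divide_nonneg_nonneg sum_nonneg)
  have r0: "r \<ge> 0" using rge[of undefined] real_sqrt_ge_zero[OF Rs0] by (rule order.trans[rotated])
  have fb: "\<bar>FF Delta I N k J U\<bar> \<le> 2 * (sqrt (real N) * \<alpha> k)" if "k \<ge> 1" "\<And>j. j < k \<Longrightarrow> U j \<in> Mbar I N" for k U
    by (rule full_bound[OF good that]) auto
  define g where "g \<omega> m = FF Delta I N (Suc m) J (\<lambda>_. \<omega>)" for \<omega> m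
  have summ2: "summable (\<lambda>m. real (Suc m) * (2 * sqrt (real N) * \<alpha> (Suc m)))"
  proof -
    have "(\<lambda>m. real (Suc m) * (2 * sqrt (real N) * \<alpha> (Suc m))) = (\<lambda>m. (2 * sqrt (real N)) * (real (Suc m) * \<alpha> (Suc m)))"
      by (simp add: fun_eq_iff mult_ac)
    then show ?thesis using summable_mult[OF summ, of "2 * sqrt (real N)"] by simp
  qed
  have gsum: "summable (g \<omega>)" if "\<omega> \<in> Mbar I N" for \<omega>
  proof (rule summable_comparison_test[OF _ summ2])
    show "\<exists>N'. \<forall>n\<ge>N'. norm (g \<omega> n) \<le> real (Suc n) * (2 * sqrt (real N) * \<alpha> (Suc n))"
    proof (intro exI[of _ 0] allI impI)
      fix n
      have "norm (g \<omega> n) \<le> 2 * (sqrt (real N) * \<alpha> (Suc n))" unfolding g_def using fb[of "Suc n"] that by auto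
      also have "\<dots> = 1 * (2 * sqrt (real N) * \<alpha> (Suc n))" by simp
      also have "\<dots> \<le> real (Suc n) * (2 * sqrt (real N) * \<alpha> (Suc n))"
        using a0 by (intro mult_right_mono) auto
      finally show "norm (g \<omega> n) \<le> real (Suc n) * (2 * sqrt (real N) * \<alpha> (Suc n))" .
    qed
  qed
  have main: "\<bar>HN Delta I N J \<sigma> - HN Delta I N J \<pi>\<bar> / real N \<le> 2 * S * r'" if r': "r' > r" for r'
  proof -
    have r'0: "r' > 0" using r0 r' by simp
    define d where "d = (\<lambda>i. (\<sigma> i - \<pi> i) / r')"
    have dM: "d \<in> Mbar I N"
      unfolding Mbar_def
    proof safe
      fix s
      show "(\<Sum>i\<in>I N s. (d i)\<^sup>2) \<le> real (Nsp I N s)"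
      proof (cases "Nsp I N s = 0")
        case True
        then have "I N s = {}" using fin_I unfolding Nsp_def by simp
        then show ?thesis by simp
      next
        case False
        define R where "R = Rs I N s (\<lambda>i. \<sigma> i - \<pi> i) (\<lambda>i. \<sigma> i - \<pi> i)"
        have R0: "R \<ge> 0" unfolding R_def Rs_def by (auto intro!: divide_nonneg_nonneg sum_nonneg)
        have "sqrt R < r'" using rge[of s] r' unfolding R_def by simp
        then have "(sqrt R)\<^sup>2 < r'\<^sup>2" using R0 by (intro power_strict_mono) auto
        then have "R < r'\<^sup>2" using R0 by simp
        have sumR: "(\<Sum>i\<in>I N s. (\<sigma> i - \<pi> i)\<^sup>2) = R * real (Nsp I N s)"
          using False unfolding R_def Rs_def by (simp add: power2_eq_square)
        have "(\<Sum>i\<in>I N s. (d i)\<^sup>2) = (\<Sum>i\<in>I N s. (\<sigma> i - \<pi> i)\<^sup>2) / r'\<^sup>2"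
          unfolding d_def by (simp add: power_divide sum_divide_distrib)
        also have "\<dots> = R * real (Nsp I N s) / r'\<^sup>2" by (simp add: sumR)
        also have "\<dots> \<le> r'\<^sup>2 * real (Nsp I N s) / r'\<^sup>2"
          using \<open>R < r'\<^sup>2\<close> by (intro divide_right_mono mult_right_mono) auto
        also have "\<dots> = real (Nsp I N s)" using r'0 by simp
        finally show ?thesis .
      qed
    qed
    have diff: "\<bar>g \<sigma> m - g \<pi> m\<bar> \<le> real (Suc m) * (2 * sqrt (real N) * \<alpha> (Suc m)) * r'" for m
    proof -
      define W' where "W' j = (\<lambda>l::nat. if l < j then \<pi> else if l = j then d else \<sigma>)" for j :: nat
      have eqW: "(\<lambda>l. if l < j then (\<lambda>_. \<pi>) l else if l = j then (\<lambda>i. (\<lambda>_. \<sigma>) l i - (\<lambda>_. \<pi>) l i) else (\<lambda>_. \<sigma>) l)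
            = (W' j)(j := (\<lambda>i. r' * d i))" for j
      proof (rule ext)
        fix l
        show "(if l < j then (\<lambda>_. \<pi>) l else if l = j then (\<lambda>i. (\<lambda>_. \<sigma>) l i - (\<lambda>_. \<pi>) l i) else (\<lambda>_. \<sigma>) l)
            = ((W' j)(j := (\<lambda>i. r' * d i))) l"
          using r'0 by (cases "l = j") (auto simp: W'_def d_def)
      qed
      have W'j: "(W' j)(j := d) = W' j" for j by (auto simp: W'_def fun_eq_iff)
      have "g \<sigma> m - g \<pi> m = (\<Sum>j<Suc m. r' * FF Delta I N (Suc m) J (W' j))"
        unfolding g_def FF_tele eqW
        by (intro sum.cong refl) (metis FF_scale W'j lessThan_iff)
      also have "\<bar>\<dots>\<bar> \<le> (\<Sum>j<Suc m. \<bar>r' * FF Delta I N (Suc m) J (W' j)\<bar>)" by (rule sum_abs)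
      also have "\<dots> \<le> (\<Sum>j<Suc m. r' * (2 * (sqrt (real N) * \<alpha> (Suc m))))"
      proof (rule sum_mono)
        fix j assume "j \<in> {..<Suc m}"
        have "\<bar>FF Delta I N (Suc m) J (W' j)\<bar> \<le> 2 * (sqrt (real N) * \<alpha> (Suc m))"
          by (rule fb) (use \<sigma> \<pi> dM in \<open>auto simp: W'_def\<close>)
        then show "\<bar>r' * FF Delta I N (Suc m) J (W' j)\<bar> \<le> r' * (2 * (sqrt (real N) * \<alpha> (Suc m)))"
          using r'0 by (simp add: abs_mult mult_left_mono)
      qed
      also have "\<dots> = real (Suc m) * (2 * sqrt (real N) * \<alpha> (Suc m)) * r'" by (simp add: mult_ac)
      finally show ?thesis .
    qed
    define b where "b m = real (Suc m) * (2 * sqrt (real N) * \<alpha> (Suc m)) * r'" for m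
    have bs: "summable b" unfolding b_def by (rule summable_mult2[OF summ2])
    have gd: "summable (\<lambda>m. g \<sigma> m - g \<pi> m)" by (rule summable_diff[OF gsum[OF \<sigma>] gsum[OF \<pi>]])
    have "HN Delta I N J \<sigma> - HN Delta I N J \<pi> = sqrt (real N) * (\<Sum>m. g \<sigma> m - g \<pi> m)"
      unfolding HN_eq g_def[symmetric] using suminf_diff[OF gsum[OF \<sigma>] gsum[OF \<pi>]] by (simp only: right_diff_distrib[symmetric])
    moreover have "\<bar>\<Sum>m. g \<sigma> m - g \<pi> m\<bar> \<le> (\<Sum>m. b m)"
    proof -
      have dm: "g \<sigma> m - g \<pi> m \<le> b m \<and> - b m \<le> g \<sigma> m - g \<pi> m" for m
        using diff[of m] unfolding b_def abs_le_iff by linarith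
      have "(\<Sum>m. g \<sigma> m - g \<pi> m) \<le> (\<Sum>m. b m)"
        by (rule suminf_le[OF _ gd bs]) (use dm in blast)
      moreover have "(\<Sum>m. - b m) \<le> (\<Sum>m. g \<sigma> m - g \<pi> m)"
        by (rule suminf_le[OF _ summable_minus[OF bs] gd]) (use dm in blast)
      moreover have "(\<Sum>m. - b m) = - (\<Sum>m. b m)" by (rule suminf_minus[OF bs])
      ultimately show ?thesis by linarith
    qed
    moreover have "(\<Sum>m. b m) = 2 * sqrt (real N) * r' * S"
    proof -
      have "(\<Sum>m. b m) = (\<Sum>m. (2 * sqrt (real N) * r') * (real (Suc m) * \<alpha> (Suc m)))"
        unfolding b_def by (intro suminf_cong) (simp add: mult_ac)
      also have "\<dots> = (2 * sqrt (real N) * r') * S" unfolding S_def by (rule suminf_mult[OF summ])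
      finally show ?thesis .
    qed
    ultimately have "\<bar>HN Delta I N J \<sigma> - HN Delta I N J \<pi>\<bar> \<le> sqrt (real N) * (2 * sqrt (real N) * r' * S)"
      by (simp add: abs_mult mult_left_mono)
    also have "\<dots> = real N * (2 * S * r')" by (simp add: mult_ac)
    finally show ?thesis using N1 by (simp add: pos_divide_le_eq mult.commute)
  qed
  have "\<bar>HN Delta I N J \<sigma> - HN Delta I N J \<pi>\<bar> / real N \<le> 2 * S * r"
  proof (rule field_le_epsilon)
    fix e :: real assume e: "e > 0"
    show "\<bar>HN Delta I N J \<sigma> - HN Delta I N J \<pi>\<bar> / real N \<le> 2 * S * r + e"
    proof (cases "S = 0")
      case True
      then show ?thesis using main[of "r + 1"] e by simp
    next
      case False
      then have Sp: "S > 0" using S0 by simp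
      have "\<bar>HN Delta I N J \<sigma> - HN Delta I N J \<pi>\<bar> / real N \<le> 2 * S * (r + e / (2 * S))"
        by (rule main) (use e Sp in simp)
      also have "\<dots> = 2 * S * r + e" using Sp by (simp add: field_simps)
      finally show ?thesis .
    qed
  qed
  then show ?thesis unfolding S_def r_def .
qed

end



theorem lemma25:
  fixes Delta :: "('s::finite \<Rightarrow> nat) \<Rightarrow> real"
    and I :: "nat \<Rightarrow> 's \<Rightarrow> nat set"
    and lam :: "'s \<Rightarrow> real"
  assumes part_disj: "\<And>N s s'. N \<ge> 1 \<Longrightarrow> s \<noteq> s' \<Longrightarrow> I N s \<inter> I N s' = {}"
    and part_cover: "\<And>N. N \<ge> 1 \<Longrightarrow> (\<Union>s. I N s) = {1..N}"
    and ratio: "\<And>s. (\<lambda>N. real (Nsp I N s) / real N) \<longlonglongrightarrow> lam s"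
    and lam: "\<And>s. 0 < lam s \<and> lam s < 1"
    and Delta_nonneg: "\<And>p. p \<in> Pset \<Longrightarrow> Delta p \<ge> 0"
    and xi_finite: "\<exists>\<epsilon>>0. (\<lambda>p. (Delta p)\<^sup>2 * (\<Prod>s\<in>UNIV. (1 + \<epsilon>) ^ p s)) summable_on Pset"
  shows "\<forall>t>0. \<exists>L>0. \<forall>N\<ge>1. \<exists>A\<in>sets gauss_space.
           A \<subseteq> {J \<in> space gauss_space. \<forall>\<sigma>\<in>Mbar I N. \<forall>\<pi>\<in>Mbar I N.
                 \<bar>HN Delta I N J \<sigma> - HN Delta I N J \<pi>\<bar> / real N
                   \<le> L * Max (range (\<lambda>s. sqrt (Rs I N s (\<lambda>i. \<sigma> i - \<pi> i) (\<lambda>i. \<sigma> i - \<pi> i))))}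
           \<and> measure gauss_space A > 1 - exp (- t * real N)"
proof (intro allI impI)
  fix t :: real assume t: "t > 0"
  obtain \<epsilon> where eps: "\<epsilon> > 0" and sm: "(\<lambda>p. (Delta p)\<^sup>2 * (\<Prod>s\<in>UNIV. (1 + \<epsilon>) ^ p s)) summable_on Pset"
    using xi_finite by blast
  define K where "K = infsum (\<lambda>p. (Delta p)\<^sup>2 * (\<Prod>s\<in>UNIV. (1 + \<epsilon>) ^ p s)) Pset"
  define V where "V = K + 1"
  define \<rho> where "\<rho> = 1 / (1 + \<epsilon>)"
  define c where "c = sqrt (2 * V * (t + 7))"
  define \<alpha> where "\<alpha> k = c * real k * sqrt \<rho> ^ k" for k :: nat
  have K0: "K \<ge> 0" unfolding K_def using eps by (intro infsum_nonneg) (auto intro!: mult_nonneg_nonneg prod_nonneg)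
  have c0: "c \<ge> 0" unfolding c_def V_def using K0 t by simp
  have rho: "0 < \<rho>" "\<rho> < 1" using eps by (auto simp: \<rho>_def)
  have a0: "\<alpha> k \<ge> 0" for k using c0 rho by (simp add: \<alpha>_def)
  have summ: "summable (\<lambda>m. real (Suc m) * \<alpha> (Suc m))"
  proof -
    have "summable (\<lambda>m. (c * sqrt \<rho>) * ((real m + 1)\<^sup>2 * sqrt \<rho> ^ m))"
      by (rule summable_mult[OF summ_sq]) (use rho in auto)
    moreover have "(\<lambda>m. (c * sqrt \<rho>) * ((real m + 1)\<^sup>2 * sqrt \<rho> ^ m)) = (\<lambda>m. real (Suc m) * \<alpha> (Suc m))"
      by (auto simp: \<alpha>_def fun_eq_iff power2_eq_square algebra_simps)
    ultimately show ?thesis by simp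
  qed
  define S where "S = (\<Sum>m. real (Suc m) * \<alpha> (Suc m))"
  have S0: "S \<ge> 0" unfolding S_def using a0 by (intro suminf_nonneg summ) auto
  define L where "L = 2 * S + 1"
  have L0: "L > 0" using S0 by (simp add: L_def)
  show "\<exists>L>0. \<forall>N\<ge>1. \<exists>A\<in>sets gauss_space.
           A \<subseteq> {J \<in> space gauss_space. \<forall>\<sigma>\<in>Mbar I N. \<forall>\<pi>\<in>Mbar I N.
                 \<bar>HN Delta I N J \<sigma> - HN Delta I N J \<pi>\<bar> / real N
                   \<le> L * Max (range (\<lambda>s. sqrt (Rs I N s (\<lambda>i. \<sigma> i - \<pi> i) (\<lambda>i. \<sigma> i - \<pi> i))))}
           \<and> measure gauss_space A > 1 - exp (- t * real N)"
  proof (intro exI[of _ L] conjI allI impI L0)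
    fix N :: nat assume N1: "N \<ge> 1"
    interpret spart I N by unfold_locales (use part_disj part_cover N1 in auto)
    interpret P: prob_space gauss_space by (rule prob_gauss)
    define Bad where "Bad k = (\<Union>U\<in>PiE {..<k} (\<lambda>_. net (1 / (2 * real k))).
            {J \<in> space gauss_space. sqrt (real N) * (c * real k * sqrt \<rho> ^ k) < \<bar>FF Delta I N k J U\<bar>})" for k
    have badm: "Bad k \<in> sets gauss_space" if k: "k \<ge> 1" for k
    proof -
      have "real N \<le> real (2 * k * N) * (1 / (2 * real k))" using k by simp
      from net_card[OF _ this] k have "finite (net (1 / (2 * real k)))" by auto
      then have fin: "finite (PiE {..<k} (\<lambda>_. net (1 / (2 * real k))))" by (intro finite_PiE) auto
      have "{J \<in> space gauss_space. sqrt (real N) * (c * real k * sqrt \<rho> ^ k) < \<bar>FF Delta I N k J U\<bar>} \<in> sets gauss_space" for U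
        by measurable
      then show ?thesis unfolding Bad_def using fin by (intro sets.finite_UN) auto
    qed
    have badp: "measure gauss_space (Bad k) \<le> 2 * exp (- t * real N) * exp (-3) ^ k" if k: "k \<ge> 1" for k
      unfolding Bad_def by (rule bad_bound[OF N1 t eps sm K_def V_def \<rho>_def c_def k])
    define B where "B = (\<Union>m. Bad (Suc m))"
    define A where "A = space gauss_space - B"
    have Bm: "B \<in> sets gauss_space" unfolding B_def using badm by auto
    have Am: "A \<in> sets gauss_space" unfolding A_def using Bm by auto
    define x where "x = exp (-3::real)"
    have x: "0 < x" "x < 1" "4 * x \<le> 1"
    proof -
      show "0 < x" by (simp add: x_def)
      have "4 \<le> exp (3::real)" using exp_ge_add_one_self[of 3] by simp
      then show "4 * x \<le> 1" by (simp add: x_def exp_minus field_simps)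
      then show "x < 1" using \<open>0 < x\<close> by simp
    qed
    define E where "E = exp (- t * real N)"
    have E0: "E > 0" by (simp add: E_def)
    have geo: "summable (\<lambda>m. 2 * E * x ^ Suc m)"
      using x by (intro summable_mult summable_geometric) auto
    have sumgeo: "(\<Sum>m. 2 * E * x ^ Suc m) = 2 * E * (x / (1 - x))"
    proof -
      have "(\<Sum>m. 2 * E * x ^ Suc m) = (\<Sum>m. (2 * E * x) * x ^ m)" by (simp add: mult_ac)
      also have "\<dots> = (2 * E * x) * (\<Sum>m. x ^ m)" by (rule suminf_mult) (use x in auto)
      also have "(\<Sum>m. x ^ m) = 1 / (1 - x)" using suminf_geometric[of x] x by simp
      finally show ?thesis by simp
    qed
    have sB: "summable (\<lambda>m. measure gauss_space (Bad (Suc m)))"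
    proof (rule summable_comparison_test[OF _ geo])
      show "\<exists>N'. \<forall>n\<ge>N'. norm (measure gauss_space (Bad (Suc n))) \<le> 2 * E * x ^ Suc n"
        using badp[of "Suc _"] by (intro exI[of _ 0] allI impI) (simp add: E_def x_def)
    qed
    have "measure gauss_space B \<le> (\<Sum>m. measure gauss_space (Bad (Suc m)))"
      unfolding B_def by (rule P.finite_measure_subadditive_countably) (use badm sB in auto)
    also have "\<dots> \<le> (\<Sum>m. 2 * E * x ^ Suc m)"
      by (rule suminf_le[OF _ sB geo]) (use badp[of "Suc _"] in \<open>simp add: E_def x_def\<close>)
    also have "\<dots> = 2 * E * (x / (1 - x))" by (rule sumgeo)
    also have "\<dots> < E"
    proof -
      have "2 * (x / (1 - x)) < 1" using x by (simp add: field_simps)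
      then have "E * (2 * (x / (1 - x))) < E * 1" using E0 by (intro mult_strict_left_mono)
      then show ?thesis by (simp add: mult_ac)
    qed
    finally have mB: "measure gauss_space B < E" .
    have "measure gauss_space A = 1 - measure gauss_space B"
      unfolding A_def by (rule P.prob_compl[OF Bm])
    then have mA: "measure gauss_space A > 1 - exp (- t * real N)" using mB by (simp add: E_def)
    have sub: "A \<subseteq> {J \<in> space gauss_space. \<forall>\<sigma>\<in>Mbar I N. \<forall>\<pi>\<in>Mbar I N.
                 \<bar>HN Delta I N J \<sigma> - HN Delta I N J \<pi>\<bar> / real N
                   \<le> L * Max (range (\<lambda>s. sqrt (Rs I N s (\<lambda>i. \<sigma> i - \<pi> i) (\<lambda>i. \<sigma> i - \<pi> i))))}"
    proof (intro subsetI CollectI conjI ballI)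
      fix J assume JA: "J \<in> A"
      then show "J \<in> space gauss_space" by (simp add: A_def)
      have good: "\<bar>FF Delta I N k J U\<bar> \<le> sqrt (real N) * \<alpha> k"
        if k: "k \<ge> 1" and U: "\<And>j. j < k \<Longrightarrow> U j \<in> net (1 / (2 * real k))" for k U
      proof -
        obtain m where km: "k = Suc m" using k by (cases k) auto
        have nB: "J \<notin> Bad k" using JA km unfolding A_def B_def by auto
        have R: "restrict U {..<k} \<in> PiE {..<k} (\<lambda>_. net (1 / (2 * real k)))" using U by auto
        have Js: "J \<in> space gauss_space" using JA by (simp add: A_def)
        have "\<forall>V\<in>PiE {..<k} (\<lambda>_. net (1 / (2 * real k))). \<not> (sqrt (real N) * (c * real k * sqrt \<rho> ^ k) < \<bar>FF Delta I N k J V\<bar>)"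
          using nB Js unfolding Bad_def by blast
        then have "\<not> (sqrt (real N) * (c * real k * sqrt \<rho> ^ k) < \<bar>FF Delta I N k J (restrict U {..<k})\<bar>)"
          using R by blast
        then have "\<bar>FF Delta I N k J (restrict U {..<k})\<bar> \<le> sqrt (real N) * (c * real k * sqrt \<rho> ^ k)"
          by simp
        moreover have "FF Delta I N k J (restrict U {..<k}) = FF Delta I N k J U" by (rule FF_cong) auto
        ultimately show ?thesis by (simp add: \<alpha>_def)
      qed
      fix \<sigma> \<pi> assume \<sigma>: "\<sigma> \<in> Mbar I N" and \<pi>: "\<pi> \<in> Mbar I N"
      define r where "r = Max (range (\<lambda>s. sqrt (Rs I N s (\<lambda>i. \<sigma> i - \<pi> i) (\<lambda>i. \<sigma> i - \<pi> i))))"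
      have Rs0: "Rs I N s f f \<ge> 0" for s f unfolding Rs_def by (auto intro!: divide_nonneg_nonneg sum_nonneg)
      have "sqrt (Rs I N undefined (\<lambda>i. \<sigma> i - \<pi> i) (\<lambda>i. \<sigma> i - \<pi> i)) \<le> r"
        unfolding r_def by (rule Max_ge) auto
      then have r0: "r \<ge> 0" using real_sqrt_ge_zero[OF Rs0] by (rule order.trans[rotated])
      have "\<bar>HN Delta I N J \<sigma> - HN Delta I N J \<pi>\<bar> / real N \<le> 2 * S * r"
        unfolding S_def r_def by (rule lip[OF N1 a0 good summ \<sigma> \<pi>])
      also have "\<dots> \<le> L * r" unfolding L_def using r0 by (intro mult_right_mono) auto
      finally show "\<bar>HN Delta I N J \<sigma> - HN Delta I N J \<pi>\<bar> / real N
                   \<le> L * Max (range (\<lambda>s. sqrt (Rs I N s (\<lambda>i. \<sigma> i - \<pi> i) (\<lambda>i. \<sigma> i - \<pi> i))))"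
        unfolding r_def .
    qed
    show "\<exists>A\<in>sets gauss_space.
           A \<subseteq> {J \<in> space gauss_space. \<forall>\<sigma>\<in>Mbar I N. \<forall>\<pi>\<in>Mbar I N.
                 \<bar>HN Delta I N J \<sigma> - HN Delta I N J \<pi>\<bar> / real N
                   \<le> L * Max (range (\<lambda>s. sqrt (Rs I N s (\<lambda>i. \<sigma> i - \<pi> i) (\<lambda>i. \<sigma> i - \<pi> i))))}
           \<and> measure gauss_space A > 1 - exp (- t * real N)"
      using Am sub mA by blast
  qed
qed


end
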